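(* Let $G$ be a finite, simple, connected graph with vertex set $V$, maximum degree $m$, and an involution $\sigma$. Let $v\in V$ with $v':=\sigma(v)\ne v$ and $d=d(v,v')$. Let $H=A_G+D_Q$ with potential $Q$ at $v$ and $v'$ and $0$ elsewhere. For every (small) $\epsilon\in(0,1)$, if $$Q\ge \frac{256\,(m+1)}{\epsilon^2},$$ then there exists a time $t$ with $0<t<\frac{\pi}{2}(Q+m)^{d-1}$ such that $p(t)\ge 1-\epsilon$.
   Context: $A_G$ is the adjacency matrix of $G$ and $D_Q$ is the diagonal matrix of the potential. An involution of $G$ is a bijection $\sigma:V\to V$ with $\sigma\circ\sigma=\mathrm{id}$ such that $x\sim y$ implies $\sigma(x)\sim\sigma(y)$. The transfer probability from $v$ to $v'$ at time $t$ is $p(t)=|\langle e_v, e^{itH} e_{v'}\rangle|^2$, where $e_x$ is the standard basis vector of vertex $x$. *)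

theory Defs
  imports "HOL-Analysis.Analysis"
begin

definition simple_graph :: "('a \<Rightarrow> 'a \<Rightarrow> bool) \<Rightarrow> bool" where
  "simple_graph E \<longleftrightarrow> (\<forall>x y. E x y \<longrightarrow> E y x) \<and> (\<forall>x. \<not> E x x)"

definition connected_graph :: "('a \<Rightarrow> 'a \<Rightarrow> bool) \<Rightarrow> bool" where
  "connected_graph E \<longleftrightarrow> (\<forall>x y. E\<^sup>*\<^sup>* x y)"

definition graph_dist :: "('a \<Rightarrow> 'a \<Rightarrow> bool) \<Rightarrow> 'a \<Rightarrow> 'a \<Rightarrow> nat" where
  "graph_dist E x y = (LEAST n. (E ^^ n) x y)"

definition max_degree :: "('a::finite \<Rightarrow> 'a \<Rightarrow> bool) \<Rightarrow> nat" where
  "max_degree E = Max (range (\<lambda>x. card {y. E x y}))"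

definition graph_involution :: "('a \<Rightarrow> 'a \<Rightarrow> bool) \<Rightarrow> ('a \<Rightarrow> 'a) \<Rightarrow> bool" where
  "graph_involution E \<sigma> \<longleftrightarrow> \<sigma> \<circ> \<sigma> = id \<and> (\<forall>x y. E x y \<longrightarrow> E (\<sigma> x) (\<sigma> y))"

definition adj_matrix :: "('a \<Rightarrow> 'a \<Rightarrow> bool) \<Rightarrow> 'a \<Rightarrow> 'a \<Rightarrow> real" where
  "adj_matrix E x y = (if E x y then 1 else 0)"

definition hamiltonian :: "('a \<Rightarrow> 'a \<Rightarrow> bool) \<Rightarrow> real \<Rightarrow> 'a \<Rightarrow> 'a \<Rightarrow> 'a \<Rightarrow> 'a \<Rightarrow> real" where
  "hamiltonian E Q v v' x y = adj_matrix E x y + (if x = y \<and> (x = v \<or> x = v') then Q else 0)"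

fun mat_pow :: "('a::finite \<Rightarrow> 'a \<Rightarrow> complex) \<Rightarrow> nat \<Rightarrow> 'a \<Rightarrow> 'a \<Rightarrow> complex" where
  "mat_pow M 0 = (\<lambda>x y. if x = y then 1 else 0)"
| "mat_pow M (Suc k) = (\<lambda>x y. \<Sum>z\<in>UNIV. M x z * mat_pow M k z y)"

definition mat_exp :: "('a::finite \<Rightarrow> 'a \<Rightarrow> complex) \<Rightarrow> 'a \<Rightarrow> 'a \<Rightarrow> complex" where
  "mat_exp M x y = (\<Sum>k. mat_pow M k x y / of_nat (fact k))"

definition transfer_prob :: "('a::finite \<Rightarrow> 'a \<Rightarrow> real) \<Rightarrow> 'a \<Rightarrow> 'a \<Rightarrow> real \<Rightarrow> real" where
  "transfer_prob H v v' t = (cmod (mat_exp (\<lambda>x y. \<i> * complex_of_real (t * H x y)) v v'))\<^sup>2"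

end

theory Submission
  imports Defs
begin


lemma mat_pow_Suc_app: "mat_pow M (Suc k) x y = (\<Sum>z\<in>UNIV. M x z * mat_pow M k z y)"
  by simp

lemma mat_pow_0_app: "mat_pow M 0 x y = (if x = y then 1 else 0)"
  by simp

declare mat_pow.simps[simp del]

lemma sum_delta_mult: fixes f :: "'c::finite \<Rightarrow> 'b::comm_ring_1"
  shows "(\<Sum>z\<in>UNIV. (if x = z then 1 else 0) * f z) = f x"
  by (simp add: if_distrib[where f="\<lambda>a. a * _"] cong: if_cong)
lemma sum_delta_mult2: fixes f :: "'c::finite \<Rightarrow> 'b::comm_ring_1"
  shows "(\<Sum>z\<in>UNIV. f z * (if z = y then 1 else 0)) = f y"
  by (simp add: if_distrib[where f="\<lambda>a. _ * a"] cong: if_cong)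

lemma mat_pow_one: "mat_pow M 1 x y = M x y"
  by (simp add: mat_pow_Suc_app mat_pow_0_app if_distrib cong: if_cong)

lemma mat_pow_scale:
  "mat_pow (\<lambda>x y. c * P x y) k x y = c ^ k * mat_pow P k x y"
proof (induction k arbitrary: x y)
  case 0 then show ?case by (simp add: mat_pow_0_app)
next
  case (Suc k)
  show ?case by (simp add: mat_pow_Suc_app Suc sum_distrib_left mult_ac)
qed

lemma mat_pow_add:
  "mat_pow P (j + k) x y = (\<Sum>z\<in>UNIV. mat_pow P j x z * mat_pow P k z y)"
proof (induction j arbitrary: x y)
  case 0 then show ?case by (simp add: mat_pow_0_app sum_delta_mult)
next
  case (Suc j)
  have "mat_pow P (Suc j + k) x y = (\<Sum>w\<in>UNIV. P x w * (\<Sum>z\<in>UNIV. mat_pow P j w z * mat_pow P k z y))"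
    by (simp add: mat_pow_Suc_app Suc)
  also have "\<dots> = (\<Sum>w\<in>UNIV. \<Sum>z\<in>UNIV. P x w * mat_pow P j w z * mat_pow P k z y)"
    by (simp add: sum_distrib_left mult_ac)
  also have "\<dots> = (\<Sum>z\<in>UNIV. \<Sum>w\<in>UNIV. P x w * mat_pow P j w z * mat_pow P k z y)"
    by (rule sum.swap)
  also have "\<dots> = (\<Sum>z\<in>UNIV. (\<Sum>w\<in>UNIV. P x w * mat_pow P j w z) * mat_pow P k z y)"
    by (simp add: sum_distrib_right)
  finally show ?case by (simp add: mat_pow_Suc_app)
qed

lemma mat_pow_sym:
  assumes "\<And>x y. P x y = P y x"
  shows "mat_pow P k x y = mat_pow P k y x"
proof (induction k arbitrary: x y)
  case 0 then show ?case by (simp add: mat_pow_0_app)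
next
  case (Suc k)
  have "mat_pow P (Suc k) x y = mat_pow P (k + 1) x y" by simp
  also have "\<dots> = (\<Sum>z\<in>UNIV. mat_pow P k x z * P z y)"
    by (simp only: mat_pow_add mat_pow_one)
  also have "\<dots> = (\<Sum>z\<in>UNIV. P y z * mat_pow P k z x)"
    by (simp add: Suc assms mult.commute)
  finally show ?case by (simp add: mat_pow_Suc_app)
qed

lemma mat_pow_cnj:
  "cnj (mat_pow P k x y) = mat_pow (\<lambda>x y. cnj (P x y)) k x y"
proof (induction k arbitrary: x y)
  case 0 then show ?case by (simp add: mat_pow_0_app)
next
  case (Suc k) then show ?case by (simp add: mat_pow_Suc_app)
qed

lemma mat_pow_bound:
  fixes P :: "'a::finite \<Rightarrow> 'a \<Rightarrow> complex"
  assumes "\<And>x y. norm (P x y) \<le> c"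
  shows "norm (mat_pow P k x y) \<le> (real CARD('a) * c) ^ k"
proof (induction k arbitrary: x y)
  case 0 then show ?case by (simp add: mat_pow_0_app)
next
  case (Suc k)
  have c0: "0 \<le> c" using assms[of x y] norm_ge_zero order_trans by blast
  have "norm (mat_pow P (Suc k) x y) \<le> (\<Sum>z\<in>UNIV. norm (P x z * mat_pow P k z y))"
    unfolding mat_pow_Suc_app by (rule norm_sum)
  also have "\<dots> \<le> (\<Sum>z\<in>(UNIV::'a set). c * (real CARD('a) * c) ^ k)"
    apply (rule sum_mono) unfolding norm_mult
    by (rule mult_mono[OF assms Suc]) (auto simp: c0)
  also have "\<dots> = (real CARD('a) * c) ^ Suc k" by simp
  finally show ?case .
qed

lemma mat_exp_summable:
  fixes P :: "'a::finite \<Rightarrow> 'a \<Rightarrow> complex"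
  shows "summable (\<lambda>k. norm (mat_pow P k x y / of_nat (fact k)))"
proof -
  obtain c where c: "\<And>x y. norm (P x y) \<le> c"
  proof
    show "norm (P x y) \<le> (\<Sum>p\<in>UNIV. norm (P (fst p) (snd p)))" for x y
      using member_le_sum[of "(x,y)" UNIV "\<lambda>p. norm (P (fst p) (snd p))"] by auto
  qed
  have "summable (\<lambda>k. inverse (fact k) * (real CARD('a) * c) ^ k)"
    by (rule summable_exp)
  then show ?thesis
  proof (rule summable_comparison_test[rotated], intro exI allI impI)
    fix k :: nat
    have "norm (mat_pow P k x y / of_nat (fact k)) = inverse (fact k) * norm (mat_pow P k x y)"
      by (simp add: norm_divide divide_inverse mult.commute norm_mult norm_inverse)
    also have "\<dots> \<le> inverse (fact k) * (real CARD('a) * c) ^ k"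
      by (rule mult_left_mono[OF mat_pow_bound[OF c]]) auto
    finally show "norm (norm (mat_pow P k x y / of_nat (fact k))) \<le> inverse (fact k) * (real CARD('a) * c) ^ k"
      by simp
  qed
qed

lemma mat_exp_sums:
  "(\<lambda>k. mat_pow P k x y / of_nat (fact k)) sums mat_exp P x y"
  unfolding mat_exp_def using summable_norm_cancel[OF mat_exp_summable] by (rule summable_sums)



lemma mat_exp_inverse:
  fixes P :: "'a::finite \<Rightarrow> 'a \<Rightarrow> complex"
  shows "(\<Sum>z\<in>UNIV. mat_exp (\<lambda>x y. - c * P x y) x z * mat_exp (\<lambda>x y. c * P x y) z y)
         = (if x = y then 1 else 0)"
proof -
  define a where "a z k = mat_pow (\<lambda>x y. - c * P x y) k x z / of_nat (fact k)" for z k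
  define b where "b z k = mat_pow (\<lambda>x y. c * P x y) k z y / of_nat (fact k)" for z k
  have "(\<lambda>n. \<Sum>i\<le>n. a z i * b z (n - i)) sums ((\<Sum>k. a z k) * (\<Sum>k. b z k))" for z
    unfolding a_def b_def by (rule Cauchy_product_sums[OF mat_exp_summable mat_exp_summable])
  hence "(\<lambda>n. \<Sum>i\<le>n. a z i * b z (n - i)) sums (mat_exp (\<lambda>x y. - c * P x y) x z * mat_exp (\<lambda>x y. c * P x y) z y)" for z
    unfolding a_def b_def mat_exp_def by simp
  hence S: "(\<lambda>n. \<Sum>z\<in>UNIV. \<Sum>i\<le>n. a z i * b z (n - i)) sums
       (\<Sum>z\<in>UNIV. mat_exp (\<lambda>x y. - c * P x y) x z * mat_exp (\<lambda>x y. c * P x y) z y)"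
    by (rule sums_sum)
  have eq: "(\<Sum>z\<in>UNIV. \<Sum>i\<le>n. a z i * b z (n - i)) = (if n = 0 then (if x = y then 1 else 0) else 0)" for n
  proof -
    have "(\<Sum>z\<in>UNIV. \<Sum>i\<le>n. a z i * b z (n - i))
        = (\<Sum>i\<le>n. ((-c)^i * c^(n-i) / (of_nat (fact i) * of_nat (fact (n-i)))) *
              (\<Sum>z\<in>UNIV. mat_pow P i x z * mat_pow P (n-i) z y))"
      unfolding a_def b_def mat_pow_scale
      by (subst sum.swap) (simp add: sum_distrib_left sum_divide_distrib algebra_simps)
    also have "\<dots> = (\<Sum>i\<le>n. (of_nat (n choose i) * (-c)^i * c^(n-i)) * (mat_pow P n x y / of_nat (fact n)))"
    proof (rule sum.cong[OF refl])
      fix i assume i: "i \<in> {..n}"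
      hence "(\<Sum>z\<in>UNIV. mat_pow P i x z * mat_pow P (n-i) z y) = mat_pow P n x y"
        using mat_pow_add[of P i "n-i" x y, symmetric] by simp
      moreover have "(of_nat (n choose i) :: complex) = fact n / (fact i * fact (n - i))"
        using i by (simp add: binomial_fact)
      ultimately show "((-c)^i * c^(n-i) / (of_nat (fact i) * of_nat (fact (n-i)))) *
              (\<Sum>z\<in>UNIV. mat_pow P i x z * mat_pow P (n-i) z y)
          = (of_nat (n choose i) * (-c)^i * c^(n-i)) * (mat_pow P n x y / of_nat (fact n))"
        by (simp add: field_simps)
    qed
    also have "\<dots> = (-c + c)^n * (mat_pow P n x y / of_nat (fact n))"
      by (simp only: binomial_ring[of "-c" c n] sum_distrib_right)
    also have "\<dots> = (if n = 0 then (if x = y then 1 else 0) else 0)"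
      by (simp add: mat_pow_0_app)
    finally show ?thesis .
  qed
  have "(\<lambda>n. if n = 0 then (if x = y then 1 else 0) else 0) sums (if x = y then (1::complex) else 0)"
    using sums_single[of 0 "\<lambda>_. if x = y then (1::complex) else 0"] by simp
  with S show ?thesis unfolding eq using sums_unique2 by blast
qed

lemma mat_exp_cnj:
  "cnj (mat_exp P x y) = mat_exp (\<lambda>x y. cnj (P x y)) x y"
proof -
  have "(\<lambda>k. cnj (mat_pow P k x y / of_nat (fact k))) sums cnj (mat_exp P x y)"
    by (rule sums_cnj[THEN iffD2, OF mat_exp_sums])
  moreover have "cnj (mat_pow P k x y / of_nat (fact k)) = mat_pow (\<lambda>x y. cnj (P x y)) k x y / of_nat (fact k)" for k
    by (simp only: complex_cnj_divide mat_pow_cnj complex_cnj_of_nat)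
  ultimately have "(\<lambda>k. mat_pow (\<lambda>x y. cnj (P x y)) k x y / of_nat (fact k)) sums cnj (mat_exp P x y)"
    by simp
  thus ?thesis using mat_exp_sums sums_unique2 by blast
qed

lemma mat_exp_sym:
  assumes "\<And>x y. P x y = P y x"
  shows "mat_exp P x y = mat_exp P y x"
  unfolding mat_exp_def by (simp only: mat_pow_sym[of P, OF assms])

lemma mat_pow_eigen:
  fixes P :: "'a::finite \<Rightarrow> 'a \<Rightarrow> complex"
  assumes "\<And>x. (\<Sum>z\<in>UNIV. P x z * \<phi> z) = \<mu> * \<phi> x"
  shows "(\<Sum>z\<in>UNIV. mat_pow P k x z * \<phi> z) = \<mu> ^ k * \<phi> x"
proof (induction k arbitrary: x)
  case 0 then show ?case by (simp add: mat_pow_0_app sum_delta_mult)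
next
  case (Suc k)
  have "(\<Sum>z\<in>UNIV. mat_pow P (Suc k) x z * \<phi> z) = (\<Sum>z\<in>UNIV. \<Sum>w\<in>UNIV. P x w * mat_pow P k w z * \<phi> z)"
    unfolding mat_pow_Suc_app by (simp add: sum_distrib_right)
  also have "\<dots> = (\<Sum>w\<in>UNIV. \<Sum>z\<in>UNIV. P x w * mat_pow P k w z * \<phi> z)"
    by (rule sum.swap)
  also have "\<dots> = (\<Sum>w\<in>UNIV. P x w * (\<Sum>z\<in>UNIV. mat_pow P k w z * \<phi> z))"
    by (simp add: sum_distrib_left mult_ac)
  also have "\<dots> = (\<Sum>w\<in>UNIV. P x w * (\<mu> ^ k * \<phi> w))"
    by (simp only: Suc.IH)
  also have "\<dots> = \<mu> ^ k * (\<Sum>w\<in>UNIV. P x w * \<phi> w)"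
    by (simp add: sum_distrib_left mult_ac)
  finally show ?case by (simp add: assms)
qed

lemma mat_exp_eigen:
  fixes P :: "'a::finite \<Rightarrow> 'a \<Rightarrow> complex"
  assumes "\<And>x. (\<Sum>z\<in>UNIV. P x z * \<phi> z) = \<mu> * \<phi> x"
  shows "(\<Sum>z\<in>UNIV. mat_exp P x z * \<phi> z) = exp \<mu> * \<phi> x"
proof -
  have "(\<lambda>k. \<Sum>z\<in>UNIV. mat_pow P k x z / of_nat (fact k) * \<phi> z) sums (\<Sum>z\<in>UNIV. mat_exp P x z * \<phi> z)"
    by (rule sums_sum) (rule sums_mult2[OF mat_exp_sums])
  moreover have "(\<Sum>z\<in>UNIV. mat_pow P k x z / of_nat (fact k) * \<phi> z) = \<mu> ^ k / fact k * \<phi> x" for k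
    using mat_pow_eigen[OF assms, of k x]
    by (simp add: sum_divide_distrib[symmetric] mult_ac)
  moreover have "(\<lambda>k. \<mu> ^ k / fact k * \<phi> x) sums (exp \<mu> * \<phi> x)"
    using sums_mult2[OF exp_converges[of \<mu>], of "\<phi> x"] by (simp add: scaleR_conv_of_real divide_inverse mult_ac)
  ultimately show ?thesis using sums_unique2 by simp
qed

lemma unitary_norm:
  fixes U :: "'a::finite \<Rightarrow> 'a \<Rightarrow> complex"
  assumes "\<And>x y. (\<Sum>z\<in>UNIV. cnj (U z x) * U z y) = (if x = y then 1 else 0)"
  shows "(\<Sum>x\<in>UNIV. (cmod (\<Sum>z\<in>UNIV. U x z * w z))\<^sup>2) = (\<Sum>z\<in>UNIV. (cmod (w z))\<^sup>2)"
proof -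
  have "complex_of_real (\<Sum>x\<in>UNIV. (cmod (\<Sum>z\<in>UNIV. U x z * w z))\<^sup>2)
      = (\<Sum>x\<in>UNIV. (\<Sum>z\<in>UNIV. U x z * w z) * cnj (\<Sum>z\<in>UNIV. U x z * w z))"
    by (simp only: of_real_sum complex_norm_square)
  also have "\<dots> = (\<Sum>x\<in>UNIV. \<Sum>z'\<in>UNIV. \<Sum>z\<in>UNIV. w z * cnj (w z') * (cnj (U x z') * U x z))"
    by (simp add: sum_distrib_left sum_distrib_right cnj_sum mult_ac)
  also have "\<dots> = (\<Sum>z'\<in>UNIV. \<Sum>x\<in>UNIV. \<Sum>z\<in>UNIV. w z * cnj (w z') * (cnj (U x z') * U x z))"
    by (rule sum.swap)
  also have "\<dots> = (\<Sum>z'\<in>UNIV. \<Sum>z\<in>UNIV. \<Sum>x\<in>UNIV. w z * cnj (w z') * (cnj (U x z') * U x z))"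
    by (rule sum.cong[OF refl], rule sum.swap)
  also have "\<dots> = (\<Sum>z'\<in>UNIV. \<Sum>z\<in>UNIV. w z * cnj (w z') * (\<Sum>x\<in>UNIV. cnj (U x z') * U x z))"
    by (simp add: sum_distrib_left)
  also have "\<dots> = (\<Sum>z'\<in>UNIV. \<Sum>z\<in>UNIV. w z * cnj (w z') * (if z' = z then 1 else 0))"
    by (simp only: assms)
  also have "\<dots> = (\<Sum>z\<in>UNIV. w z * cnj (w z))"
    by (rule sum.cong[OF refl]) (simp add: if_distrib[where f="\<lambda>a. _ * a"] cong: if_cong)
  also have "\<dots> = complex_of_real (\<Sum>z\<in>UNIV. (cmod (w z))\<^sup>2)"
    by (simp only: of_real_sum complex_norm_square)
  finally show ?thesis using of_real_eq_iff by blast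
qed



locale gsetup =
  fixes E :: "'a::finite \<Rightarrow> 'a \<Rightarrow> bool" and \<sigma> :: "'a \<Rightarrow> 'a" and v :: 'a
  assumes sg: "simple_graph E" and cg: "connected_graph E"
    and gi: "graph_involution E \<sigma>" and vne: "\<sigma> v \<noteq> v"
begin

definition A :: "'a \<Rightarrow> 'a \<Rightarrow> real" where "A = adj_matrix E"
definition Rs :: "'a set" where "Rs = - {v, \<sigma> v}"
definition AR :: "'a \<Rightarrow> 'a \<Rightarrow> real" where "AR x y = (if x \<in> Rs \<and> y \<in> Rs then A x y else 0)"
definition mv :: "('a \<Rightarrow> real) \<Rightarrow> ('a \<Rightarrow> real)" where "mv x = (\<lambda>i. \<Sum>j\<in>UNIV. AR i j * x j)"
definition it :: "nat \<Rightarrow> ('a \<Rightarrow> real) \<Rightarrow> ('a \<Rightarrow> real)" where "it k x = (mv ^^ k) x"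
definition bv :: "'a \<Rightarrow> real" where "bv z = (if z \<in> Rs then A z v else 0)"
definition bw :: "'a \<Rightarrow> real" where "bw z = (if z \<in> Rs then A z (\<sigma> v) else 0)"
abbreviation m :: real where "m \<equiv> real (max_degree E)"

lemma ss[simp]: "\<sigma> (\<sigma> x) = x"
  using gi unfolding graph_involution_def by (metis comp_apply id_apply)

lemma Esym: "E x y \<Longrightarrow> E y x" using sg unfolding simple_graph_def by blast
lemma Eirr[simp]: "\<not> E x x" using sg unfolding simple_graph_def by blast
lemma Es[simp]: "E (\<sigma> x) (\<sigma> y) \<longleftrightarrow> E x y"
  using gi unfolding graph_involution_def by (metis ss)

lemma A_sym: "A x y = A y x" unfolding A_def adj_matrix_def using Esym by auto
lemma A_nonneg: "0 \<le> A x y" unfolding A_def adj_matrix_def by auto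
lemma A_le1: "A x y \<le> 1" unfolding A_def adj_matrix_def by auto
lemma A_s[simp]: "A (\<sigma> x) (\<sigma> y) = A x y" unfolding A_def adj_matrix_def by simp
lemma A_diag[simp]: "A x x = 0" unfolding A_def adj_matrix_def by simp

lemma inj_s: "inj \<sigma>" by (metis injI ss)
lemma surj_s: "surj \<sigma>" by (metis surjI ss)

lemma sum_s: "(\<Sum>j\<in>UNIV. f (\<sigma> j)) = (\<Sum>j\<in>UNIV. (f j :: real))"
proof -
  have "(\<Sum>j\<in>UNIV. f (\<sigma> j)) = sum f (\<sigma> ` UNIV)"
    using sum.reindex[OF inj_s, of f] by simp
  also have "\<sigma> ` UNIV = UNIV" using surj_s by simp
  finally show ?thesis .
qed

lemma Rs_s[simp]: "\<sigma> x \<in> Rs \<longleftrightarrow> x \<in> Rs"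
  unfolding Rs_def by (auto, metis ss)

lemma AR_s[simp]: "AR (\<sigma> x) (\<sigma> y) = AR x y" unfolding AR_def by simp
lemma AR_sym: "AR x y = AR y x" unfolding AR_def using A_sym by auto
lemma AR_nonneg: "0 \<le> AR x y" unfolding AR_def using A_nonneg by auto
lemma AR_le_A: "AR x y \<le> A x y" unfolding AR_def using A_nonneg by auto

lemma deg_le: "(\<Sum>y\<in>UNIV. A x y) \<le> m"
proof -
  have "(\<Sum>y\<in>UNIV. A x y) = real (card {y. E x y})"
    unfolding A_def adj_matrix_def by (simp add: sum.If_cases)
  also have "card {y. E x y} \<le> max_degree E"
    unfolding max_degree_def by (rule Max_ge) auto
  finally show ?thesis by simp
qed

lemma rowAR: "(\<Sum>y\<in>UNIV. AR x y) \<le> m"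
  using sum_mono[of UNIV "AR x" "A x", OF AR_le_A] deg_le[of x] by linarith

lemma colAR: "(\<Sum>y\<in>UNIV. AR y x) \<le> m"
  using rowAR[of x] by (simp add: AR_sym)

lemma m_nonneg: "0 \<le> m" by simp

lemma mv_inf:
  assumes "\<And>z. \<bar>x z\<bar> \<le> c"
  shows "\<bar>mv x i\<bar> \<le> m * c"
proof -
  have c0: "0 \<le> c" using assms[of i] by linarith
  have "\<bar>mv x i\<bar> \<le> (\<Sum>j\<in>UNIV. \<bar>AR i j * x j\<bar>)" unfolding mv_def by (rule sum_abs)
  also have "\<dots> \<le> (\<Sum>j\<in>UNIV. AR i j * c)"
    by (rule sum_mono) (simp add: abs_mult AR_nonneg assms mult_left_mono)
  also have "\<dots> = (\<Sum>j\<in>UNIV. AR i j) * c" by (simp add: sum_distrib_right)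
  also have "\<dots> \<le> m * c" by (rule mult_right_mono[OF rowAR c0])
  finally show ?thesis .
qed

lemma mv_l1:
  assumes "(\<Sum>z\<in>UNIV. \<bar>x z\<bar>) \<le> c"
  shows "(\<Sum>i\<in>UNIV. \<bar>mv x i\<bar>) \<le> m * c"
proof -
  have "(\<Sum>i\<in>UNIV. \<bar>mv x i\<bar>) \<le> (\<Sum>i\<in>UNIV. \<Sum>j\<in>UNIV. AR i j * \<bar>x j\<bar>)"
    unfolding mv_def
    by (rule sum_mono, rule order_trans[OF sum_abs]) (simp add: abs_mult AR_nonneg)
  also have "\<dots> = (\<Sum>j\<in>UNIV. (\<Sum>i\<in>UNIV. AR i j) * \<bar>x j\<bar>)"
    by (subst sum.swap) (simp add: sum_distrib_right)
  also have "\<dots> \<le> (\<Sum>j\<in>UNIV. m * \<bar>x j\<bar>)"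
    by (rule sum_mono, rule mult_right_mono[OF colAR]) auto
  also have "\<dots> \<le> m * c" using assms by (simp add: sum_distrib_left[symmetric] mult_left_mono)
  finally show ?thesis .
qed

lemma mv_nonneg: "(\<And>z. 0 \<le> x z) \<Longrightarrow> 0 \<le> mv x i"
  unfolding mv_def by (auto intro!: sum_nonneg simp: AR_nonneg)

lemma mv_supp: "i \<notin> Rs \<Longrightarrow> mv x i = 0"
  unfolding mv_def AR_def by simp

lemma mv_s:
  assumes "\<And>z. x (\<sigma> z) = s * x z"
  shows "mv x (\<sigma> i) = s * mv x i"
proof -
  have "mv x (\<sigma> i) = (\<Sum>j\<in>UNIV. AR (\<sigma> i) (\<sigma> j) * x (\<sigma> j))"
    unfolding mv_def by (rule sum_s[symmetric, where f="\<lambda>j. AR (\<sigma> i) j * x j"])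
  also have "\<dots> = s * mv x i" by (simp add: mv_def assms sum_distrib_left mult_ac)
  finally show ?thesis .
qed

lemma it_0[simp]: "it 0 x = x" unfolding it_def by simp
lemma it_Suc: "it (Suc k) x = mv (it k x)" unfolding it_def by simp

lemma it_inf: "(\<And>z. \<bar>x z\<bar> \<le> c) \<Longrightarrow> \<bar>it k x i\<bar> \<le> m ^ k * c"
proof (induction k arbitrary: i)
  case 0 then show ?case by simp
next
  case (Suc k)
  have "\<bar>mv (it k x) i\<bar> \<le> m * (m ^ k * c)" by (rule mv_inf) (rule Suc.IH[OF Suc.prems])
  then show ?case by (simp add: it_Suc mult_ac)
qed

lemma it_l1: "(\<Sum>z\<in>UNIV. \<bar>x z\<bar>) \<le> c \<Longrightarrow> (\<Sum>i\<in>UNIV. \<bar>it k x i\<bar>) \<le> m ^ k * c"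
proof (induction k)
  case 0 then show ?case by simp
next
  case (Suc k)
  have "(\<Sum>i\<in>UNIV. \<bar>mv (it k x) i\<bar>) \<le> m * (m ^ k * c)" by (rule mv_l1) (rule Suc.IH[OF Suc.prems])
  then show ?case by (simp add: it_Suc mult_ac)
qed

lemma it_nonneg: "(\<And>z. 0 \<le> x z) \<Longrightarrow> 0 \<le> it k x i"
  by (induction k arbitrary: i) (auto simp: it_Suc intro!: mv_nonneg)

lemma it_supp: "(\<And>z. z \<notin> Rs \<Longrightarrow> x z = 0) \<Longrightarrow> i \<notin> Rs \<Longrightarrow> it k x i = 0"
  by (cases k) (auto simp: it_Suc mv_supp)

lemma it_s: "(\<And>z. x (\<sigma> z) = s * x z) \<Longrightarrow> it k x (\<sigma> i) = s * it k x i"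
proof (induction k arbitrary: i)
  case 0 then show ?case by simp
next
  case (Suc k) then show ?case unfolding it_Suc by (intro mv_s) auto
qed

lemma bv_s: "bv (\<sigma> z) = bw z" unfolding bv_def bw_def by (metis A_s Rs_s ss)
lemma bw_s: "bw (\<sigma> z) = bv z" using bv_s[of "\<sigma> z"] by simp
lemma bv_nonneg: "0 \<le> bv z" unfolding bv_def using A_nonneg by auto
lemma bw_nonneg: "0 \<le> bw z" unfolding bw_def using A_nonneg by auto
lemma bv_le1: "bv z \<le> 1" unfolding bv_def using A_le1 by auto
lemma bw_le1: "bw z \<le> 1" unfolding bw_def using A_le1 by auto
lemma bv_supp: "z \<notin> Rs \<Longrightarrow> bv z = 0" unfolding bv_def by simp
lemma bw_supp: "z \<notin> Rs \<Longrightarrow> bw z = 0" unfolding bw_def by simp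

lemma bv_l1: "(\<Sum>z\<in>UNIV. bv z) \<le> m"
proof -
  have "(\<Sum>z\<in>UNIV. bv z) \<le> (\<Sum>z\<in>UNIV. A v z)"
    by (rule sum_mono) (auto simp: bv_def A_sym A_nonneg)
  with deg_le[of v] show ?thesis by linarith
qed

lemma bw_l1: "(\<Sum>z\<in>UNIV. bw z) \<le> m"
  using bv_l1 sum_s[of bv] by (simp add: bv_s)

end


definition pw :: "(nat \<Rightarrow> real) \<Rightarrow> real \<Rightarrow> real" where
  "pw c l = (1/l) * (\<Sum>k. c k * (1/l)^k)"

lemma pow_diff_bound:
  fixes a b M :: real
  assumes "0 \<le> a" "a \<le> M" "0 \<le> b" "b \<le> M"
  shows "\<bar>a ^ n - b ^ n\<bar> \<le> real n * M ^ (n - 1) * \<bar>a - b\<bar>"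
proof -
  have "\<bar>(\<Sum>i<n. b^(n - Suc i) * a^i)\<bar> \<le> (\<Sum>i<n. M ^ (n - 1))"
  proof (rule order_trans[OF sum_abs], rule sum_mono)
    fix i assume "i \<in> {..<n}"
    hence i: "i < n" by simp
    have "\<bar>b^(n - Suc i) * a^i\<bar> = b^(n - Suc i) * a^i" using assms by simp
    also have "\<dots> \<le> M^(n - Suc i) * M^i"
      using assms by (intro mult_mono power_mono) auto
    also have "\<dots> = M ^ (n - 1)" using i by (simp add: power_add[symmetric])
    finally show "\<bar>b^(n - Suc i) * a^i\<bar> \<le> M ^ (n - 1)" .
  qed
  hence "\<bar>(\<Sum>i<n. b^(n - Suc i) * a^i)\<bar> \<le> real n * M ^ (n - 1)" by simp
  hence "\<bar>a - b\<bar> * \<bar>(\<Sum>i<n. b^(n - Suc i) * a^i)\<bar> \<le> \<bar>a - b\<bar> * (real n * M ^ (n - 1))"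
    by (rule mult_left_mono) auto
  thus ?thesis by (simp add: power_diff_sumr2 abs_mult mult_ac)
qed


lemma geom_summ: fixes m l :: real shows "0 \<le> m \<Longrightarrow> m < l \<Longrightarrow> summable (\<lambda>k. (m/l)^k)"
  by (rule summable_geometric) auto

lemma geom_val: fixes m l :: real shows "0 \<le> m \<Longrightarrow> m < l \<Longrightarrow> (\<Sum>k. (m/l)^k) = l / (l - m)"
proof -
  assume a: "0 \<le> m" "m < l"
  have "(\<Sum>k. (m/l)^k) = 1 / (1 - m/l)" by (rule suminf_geometric) (use a in auto)
  also have "\<dots> = l / (l - m)" using a by (simp add: field_simps)
  finally show ?thesis .
qed

lemma pw_summ:
  fixes c :: "nat \<Rightarrow> real" and C m l :: real
  assumes "\<And>k. \<bar>c k\<bar> \<le> C * m ^ k" "0 \<le> m" "m < l"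
  shows "summable (\<lambda>k. \<bar>c k * (1/l)^k\<bar>)" "summable (\<lambda>k. c k * (1/l)^k)"
proof -
  have l0: "0 < l" using assms by linarith
  have b: "\<bar>c k * (1/l)^k\<bar> \<le> C * (m/l)^k" for k
  proof -
    have "\<bar>c k * (1/l)^k\<bar> = \<bar>c k\<bar> * (1/l)^k" using l0 by (simp add: abs_mult)
    also have "\<dots> \<le> (C * m ^ k) * (1/l)^k" by (rule mult_right_mono[OF assms(1)]) (use l0 in simp)
    also have "\<dots> = C * (m/l)^k" by (simp add: power_divide)
    finally show ?thesis .
  qed
  have "summable (\<lambda>k. C * (m/l)^k)" by (rule summable_mult, rule geom_summ) (use assms in auto)
  thus "summable (\<lambda>k. \<bar>c k * (1/l)^k\<bar>)"
    by (rule summable_comparison_test'[where N=0]) (use b in auto)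
  thus "summable (\<lambda>k. c k * (1/l)^k)" by (rule summable_rabs_cancel)
qed

lemma pw_bound:
  fixes c :: "nat \<Rightarrow> real" and C m l :: real
  assumes "\<And>k. \<bar>c k\<bar> \<le> C * m ^ k" "0 \<le> m" "m < l"
  shows "\<bar>pw c l\<bar> \<le> C / (l - m)"
proof -
  have l0: "0 < l" using assms by linarith
  have b: "\<bar>c k * (1/l)^k\<bar> \<le> C * (m/l)^k" for k
  proof -
    have "\<bar>c k * (1/l)^k\<bar> = \<bar>c k\<bar> * (1/l)^k" using l0 by (simp add: abs_mult)
    also have "\<dots> \<le> (C * m ^ k) * (1/l)^k" by (rule mult_right_mono[OF assms(1)]) (use l0 in simp)
    also have "\<dots> = C * (m/l)^k" by (simp add: power_divide)
    finally show ?thesis .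
  qed
  have s: "summable (\<lambda>k. C * (m/l)^k)" by (rule summable_mult, rule geom_summ) (use assms in auto)
  have "\<bar>\<Sum>k. c k * (1/l)^k\<bar> \<le> (\<Sum>k. \<bar>c k * (1/l)^k\<bar>)"
    by (rule summable_rabs, rule pw_summ(1)[OF assms])
  also have "\<dots> \<le> (\<Sum>k. C * (m/l)^k)"
    by (rule suminf_le[OF b pw_summ(1)[OF assms] s])
  also have "\<dots> = C * (l / (l - m))"
    using suminf_mult[OF geom_summ[OF assms(2,3)], of C] geom_val[OF assms(2,3)] by simp
  finally have "\<bar>\<Sum>k. c k * (1/l)^k\<bar> \<le> C * (l / (l - m))" .
  hence "(1/l) * \<bar>\<Sum>k. c k * (1/l)^k\<bar> \<le> (1/l) * (C * (l / (l - m)))"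
    by (rule mult_left_mono) (use l0 in auto)
  thus ?thesis unfolding pw_def using l0 by (simp add: abs_mult)
qed

lemma pw_nonneg:
  fixes c :: "nat \<Rightarrow> real" and C m l :: real
  assumes "\<And>k. \<bar>c k\<bar> \<le> C * m ^ k" "0 \<le> m" "m < l" "\<And>k. 0 \<le> c k"
  shows "0 \<le> pw c l"
proof -
  have l0: "0 < l" using assms by linarith
  have "0 \<le> (\<Sum>k. c k * (1/l)^k)"
    by (rule suminf_nonneg[OF pw_summ(2)[OF assms(1-3)]]) (use assms(4) l0 in auto)
  thus ?thesis unfolding pw_def using l0 by simp
qed

lemma pw_sums:
  fixes c :: "nat \<Rightarrow> real" and C m l :: real
  assumes "\<And>k. \<bar>c k\<bar> \<le> C * m ^ k" "0 \<le> m" "m < l"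
  shows "(\<lambda>k. c k * (1/l)^(Suc k)) sums pw c l"
proof -
  have "(\<lambda>k. (1/l) * (c k * (1/l)^k)) sums ((1/l) * (\<Sum>k. c k * (1/l)^k))"
    by (rule sums_mult, rule summable_sums, rule pw_summ(2)[OF assms])
  thus ?thesis unfolding pw_def by (simp add: mult_ac)
qed

lemma pw_ge_term:
  fixes c :: "nat \<Rightarrow> real" and C m l :: real
  assumes "\<And>k. \<bar>c k\<bar> \<le> C * m ^ k" "0 \<le> m" "m < l" "\<And>k. 0 \<le> c k"
  shows "c j * (1/l)^(Suc j) \<le> pw c l"
proof -
  have l0: "0 < l" using assms by linarith
  have "sum (\<lambda>k. c k * (1/l)^(Suc k)) {j} \<le> (\<Sum>k. c k * (1/l)^(Suc k))"
    by (rule sum_le_suminf[OF sums_summable[OF pw_sums[OF assms(1-3)]]]) (use assms(4) l0 in auto)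
  thus ?thesis using sums_unique[OF pw_sums[OF assms(1-3)]] by simp
qed

lemma pw_cont:
  fixes c :: "nat \<Rightarrow> real" and C m l :: real
  assumes "\<And>k. \<bar>c k\<bar> \<le> C * m ^ k" "0 \<le> m" "2 * m + 1 < l"
  shows "isCont (pw c) l"
proof -
  define K where "K = 1 / (2 * m + 1)"
  have K: "0 < K" "m * K < 1" using assms(2) by (auto simp: K_def field_simps)
  have b: "\<bar>c k * K^k\<bar> \<le> C * (m * K)^k" for k
  proof -
    have "\<bar>c k * K^k\<bar> = \<bar>c k\<bar> * K^k" using K by (simp add: abs_mult)
    also have "\<dots> \<le> (C * m ^ k) * K^k" by (rule mult_right_mono[OF assms(1)]) (use K in simp)
    also have "\<dots> = C * (m * K)^k" by (simp add: power_mult_distrib)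
    finally show ?thesis .
  qed
  have "summable (\<lambda>k. C * (m * K)^k)" by (rule summable_mult, rule summable_geometric) (use K assms(2) in auto)
  hence sK: "summable (\<lambda>k. c k * K^k)"
    by (rule summable_comparison_test'[where N=0]) (use b in auto)
  have l0: "0 < l" using assms by linarith
  have "1/l < K" unfolding K_def using assms(2,3) by (simp add: field_simps)
  hence "norm (1/l) < norm K" using l0 K by simp
  hence c1: "isCont (\<lambda>x. \<Sum>n. c n * x^n) (1/l)" by (rule isCont_powser[OF sK])
  have c2: "isCont (\<lambda>x. 1/x) l" using l0 by (intro continuous_intros) (auto simp del: divide_const_simps)
  have "isCont (\<lambda>x. (\<Sum>n. c n * (1/x)^n)) l" by (rule isCont_o2[OF c2 c1])
  hence "isCont (\<lambda>x. (1/x) * (\<Sum>n. c n * (1/x)^n)) l" using c2 by (rule isCont_mult[rotated])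
  thus ?thesis unfolding pw_def[abs_def] .
qed

lemma pw_lip:
  fixes c :: "nat \<Rightarrow> real" and m L x y :: real
  assumes "\<And>k. \<bar>c k\<bar> \<le> m * m ^ k" "0 \<le> m" "2 * m < L" "L \<le> x" "L \<le> y"
  shows "\<bar>pw c x - pw c y\<bar> \<le> \<bar>x - y\<bar> * (m / (L * (L - 2 * m)))"
proof -
  have L0: "0 < L" using assms by linarith
  have mx: "m < x" "m < y" using assms by linarith+
  have x0: "0 < x" "0 < y" using L0 assms by linarith+
  have sx: "(\<lambda>k. c k * (1/x)^(Suc k)) sums pw c x" by (rule pw_sums[OF assms(1,2) mx(1)])
  have sy: "(\<lambda>k. c k * (1/y)^(Suc k)) sums pw c y" by (rule pw_sums[OF assms(1,2) mx(2)])
  have sd: "(\<lambda>k. c k * (1/x)^(Suc k) - c k * (1/y)^(Suc k)) sums (pw c x - pw c y)"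
    by (rule sums_diff[OF sx sy])
  have uxy: "\<bar>1/x - 1/y\<bar> \<le> \<bar>x - y\<bar> / L^2"
  proof -
    have "1/x - 1/y = (y - x) / (x * y)" using x0 by (simp add: field_simps)
    hence "\<bar>1/x - 1/y\<bar> = \<bar>x - y\<bar> / (x * y)" using x0 by (simp add: abs_minus_commute)
    also have "\<dots> \<le> \<bar>x - y\<bar> / L^2"
    proof (rule divide_left_mono)
      show "L^2 \<le> x * y" unfolding power2_eq_square by (rule mult_mono) (use L0 assms in auto)
    qed (use L0 x0 in \<open>auto intro!: mult_pos_pos\<close>)
    finally show ?thesis .
  qed
  define g where "g k = (m / L^2 * \<bar>x - y\<bar>) * (2 * m / L)^k" for k
  have tb: "\<bar>c k * (1/x)^(Suc k) - c k * (1/y)^(Suc k)\<bar> \<le> g k" for k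
  proof -
    have "\<bar>(1/x)^(Suc k) - (1/y)^(Suc k)\<bar> \<le> real (Suc k) * (1/L)^(Suc k - 1) * \<bar>1/x - 1/y\<bar>"
    proof (rule pow_diff_bound)
      show "1/x \<le> 1/L" "1/y \<le> 1/L" using L0 x0 assms by (simp_all add: field_simps)
    qed (use x0 in auto)
    also have "\<dots> = real (Suc k) * ((1/L)^k * \<bar>1/x - 1/y\<bar>)" by simp
    also have "\<dots> \<le> 2^k * ((1/L)^k * (\<bar>x - y\<bar> / L^2))"
    proof (rule mult_mono)
      show "real (Suc k) \<le> 2^k" using less_exp[of k]
        by (metis Suc_leI of_nat_le_iff of_nat_numeral of_nat_power)
      show "(1/L)^k * \<bar>1/x - 1/y\<bar> \<le> (1/L)^k * (\<bar>x - y\<bar> / L^2)"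
        by (rule mult_left_mono[OF uxy]) (use L0 in simp)
    qed (use L0 in auto)
    finally have 1: "\<bar>(1/x)^(Suc k) - (1/y)^(Suc k)\<bar> \<le> 2^k * ((1/L)^k * (\<bar>x - y\<bar> / L^2))" .
    have "\<bar>c k * (1/x)^(Suc k) - c k * (1/y)^(Suc k)\<bar> = \<bar>c k\<bar> * \<bar>(1/x)^(Suc k) - (1/y)^(Suc k)\<bar>"
      by (simp only: right_diff_distrib[symmetric] abs_mult)
    also have "\<dots> \<le> (m * m^k) * (2^k * ((1/L)^k * (\<bar>x - y\<bar> / L^2)))"
      by (rule mult_mono[OF assms(1) 1]) (use assms(2) in auto)
    also have "\<dots> = g k" unfolding g_def using L0 by (simp add: power_mult_distrib power_divide field_simps)
    finally show ?thesis .
  qed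
  have r: "norm (2 * m / L) < 1" using assms L0 by (simp add: field_simps)
  have gs: "g sums ((m / L^2 * \<bar>x - y\<bar>) * (1 / (1 - 2 * m / L)))"
    unfolding g_def by (rule sums_mult, rule geometric_sums[OF r])
  have sg: "summable g" using gs by (rule sums_summable)
  have sa: "summable (\<lambda>k. \<bar>c k * (1/x)^(Suc k) - c k * (1/y)^(Suc k)\<bar>)"
    by (rule summable_comparison_test'[where N=0, OF sg]) (use tb in simp)
  have "\<bar>pw c x - pw c y\<bar> = \<bar>\<Sum>k. c k * (1/x)^(Suc k) - c k * (1/y)^(Suc k)\<bar>"
    using sums_unique[OF sd] by simp
  also have "\<dots> \<le> (\<Sum>k. \<bar>c k * (1/x)^(Suc k) - c k * (1/y)^(Suc k)\<bar>)"
    by (rule summable_rabs[OF sa])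
  also have "\<dots> \<le> (\<Sum>k. g k)" by (rule suminf_le[OF tb sa sg])
  also have "\<dots> = (m / L^2 * \<bar>x - y\<bar>) * (1 / (1 - 2 * m / L))" using sums_unique[OF gs] by simp
  also have "\<dots> = \<bar>x - y\<bar> * (m / (L * (L - 2 * m)))"
    using L0 assms by (simp add: field_simps power2_eq_square)
  finally show ?thesis .
qed



lemma pw_scale2:
  assumes "summable (\<lambda>k. c k * (1/l)^k)"
  shows "pw (\<lambda>k. s * c k) l = s * pw c l"
proof -
  have "(\<Sum>k. s * c k * (1/l)^k) = s * (\<Sum>k. c k * (1/l)^k)"
    using suminf_mult[OF assms, of s] by (simp add: mult.assoc)
  thus ?thesis unfolding pw_def by simp
qed

lemma pw_lin:
  assumes "\<And>i. i \<in> I \<Longrightarrow> summable (\<lambda>k. c i k * (1/l)^k)" "finite I"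
  shows "pw (\<lambda>k. \<Sum>i\<in>I. a i * c i k) l = (\<Sum>i\<in>I. a i * pw (c i) l)"
proof -
  have "(\<Sum>k. (\<Sum>i\<in>I. a i * c i k) * (1/l)^k) = (\<Sum>k. \<Sum>i\<in>I. a i * (c i k * (1/l)^k))"
    by (simp add: sum_distrib_right mult.assoc)
  also have "\<dots> = (\<Sum>i\<in>I. \<Sum>k. a i * (c i k * (1/l)^k))"
    by (rule suminf_sum) (rule summable_mult, rule assms(1))
  also have "\<dots> = (\<Sum>i\<in>I. a i * (\<Sum>k. c i k * (1/l)^k))"
    by (rule sum.cong[OF refl], rule suminf_mult, rule assms(1))
  finally show ?thesis unfolding pw_def by (simp add: sum_distrib_left mult_ac)
qed

lemma pw_add:
  assumes "summable (\<lambda>k. c k * (1/l)^k)" "summable (\<lambda>k. e k * (1/l)^k)"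
  shows "pw (\<lambda>k. c k + e k) l = pw c l + pw e l"
proof -
  have "(\<Sum>k. (c k + e k) * (1/l)^k) = (\<Sum>k. c k * (1/l)^k) + (\<Sum>k. e k * (1/l)^k)"
    using suminf_add[OF assms] by (simp add: distrib_right)
  thus ?thesis unfolding pw_def by (simp add: distrib_left)
qed

lemma pw_abs:
  assumes "summable (\<lambda>k. \<bar>c k * (1/l)^k\<bar>)" "0 < l"
  shows "\<bar>pw c l\<bar> \<le> pw (\<lambda>k. \<bar>c k\<bar>) l"
proof -
  have "\<bar>\<Sum>k. c k * (1/l)^k\<bar> \<le> (\<Sum>k. \<bar>c k * (1/l)^k\<bar>)" by (rule summable_rabs[OF assms(1)])
  also have "\<dots> = (\<Sum>k. \<bar>c k\<bar> * (1/l)^k)" using assms(2) by (simp add: abs_mult)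
  finally have "(1/l) * \<bar>\<Sum>k. c k * (1/l)^k\<bar> \<le> (1/l) * (\<Sum>k. \<bar>c k\<bar> * (1/l)^k)"
    by (rule mult_left_mono) (use assms(2) in simp)
  thus ?thesis unfolding pw_def using assms(2) by (simp add: abs_mult)
qed

context gsetup
begin

definition Y :: "real \<Rightarrow> ('a \<Rightarrow> real) \<Rightarrow> 'a \<Rightarrow> real" where
  "Y l x z = pw (\<lambda>k. it k x z) l"

lemma it_bound': "(\<And>z. \<bar>x z\<bar> \<le> c) \<Longrightarrow> \<bar>it k x z\<bar> \<le> c * m ^ k"
  using it_inf[of x c k z] by (simp add: mult.commute)

lemma Y_summ: "(\<And>z. \<bar>x z\<bar> \<le> c) \<Longrightarrow> m < l \<Longrightarrow> summable (\<lambda>k. it k x z * (1/l)^k)"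
  by (rule pw_summ(2)[OF it_bound']) auto

lemma Y_bound: "(\<And>z. \<bar>x z\<bar> \<le> c) \<Longrightarrow> m < l \<Longrightarrow> \<bar>Y l x z\<bar> \<le> c / (l - m)"
  unfolding Y_def by (rule pw_bound[OF it_bound']) auto

lemma Y_sums: "(\<And>z. \<bar>x z\<bar> \<le> c) \<Longrightarrow> m < l \<Longrightarrow> (\<lambda>k. it k x z * (1/l)^(Suc k)) sums Y l x z"
  unfolding Y_def by (rule pw_sums[OF it_bound']) auto

lemma Y_eq:
  assumes "\<And>z. \<bar>x z\<bar> \<le> c" "m < l"
  shows "mv (Y l x) z + x z = l * Y l x z"
proof -
  have l0: "0 < l" using assms(2) m_nonneg by linarith
  have "(\<lambda>k. AR z w * (it k x w * (1/l)^(Suc k))) sums (AR z w * Y l x w)" for w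
    by (rule sums_mult, rule Y_sums[OF assms])
  hence "(\<lambda>k. \<Sum>w\<in>UNIV. AR z w * (it k x w * (1/l)^(Suc k))) sums (\<Sum>w\<in>UNIV. AR z w * Y l x w)"
    by (rule sums_sum)
  moreover have "(\<Sum>w\<in>UNIV. AR z w * (it k x w * (1/l)^(Suc k))) = it (Suc k) x z * (1/l)^(Suc k)" for k
    unfolding it_Suc mv_def sum_distrib_right by (simp only: mult.assoc)
  ultimately have s1: "(\<lambda>k. it (Suc k) x z * (1/l)^(Suc k)) sums mv (Y l x) z"
    unfolding mv_def by simp
  have "(\<lambda>k. l * (it k x z * (1/l)^(Suc k))) sums (l * Y l x z)"
    by (rule sums_mult, rule Y_sums[OF assms])
  moreover have "l * (it k x z * (1/l)^(Suc k)) = it k x z * (1/l)^k" for k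
    using l0 by (simp add: field_simps)
  ultimately have s2: "(\<lambda>k. it k x z * (1/l)^k) sums (l * Y l x z)" by simp
  from s1 have "(\<lambda>k. it k x z * (1/l)^k) sums (mv (Y l x) z + it 0 x z * (1/l)^0)"
    using sums_Suc_iff[of "\<lambda>k. it k x z * (1/l)^k"] by simp
  with s2 show ?thesis using sums_unique2 by force
qed

lemma Y_supp:
  assumes "\<And>z. z \<notin> Rs \<Longrightarrow> x z = 0" "z \<notin> Rs"
  shows "Y l x z = 0"
  unfolding Y_def pw_def using it_supp[OF assms] by simp

lemma Y_s:
  assumes "\<And>z. x (\<sigma> z) = s * x z" "\<And>z. \<bar>x z\<bar> \<le> c" "m < l"
  shows "Y l x (\<sigma> z) = s * Y l x z"
proof -
  have "(\<lambda>k. it k x (\<sigma> z)) = (\<lambda>k. s * it k x z)" using it_s[of x s, OF assms(1)] by simp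
  thus ?thesis unfolding Y_def using pw_scale2[OF Y_summ[OF assms(2,3)]] by simp
qed

lemma Y_l1:
  assumes "\<And>z. \<bar>x z\<bar> \<le> c" "(\<Sum>z\<in>UNIV. \<bar>x z\<bar>) \<le> c1" "m < l"
  shows "(\<Sum>z\<in>UNIV. \<bar>Y l x z\<bar>) \<le> c1 / (l - m)"
proof -
  have l0: "0 < l" using assms(3) m_nonneg by linarith
  have "(\<Sum>z\<in>UNIV. \<bar>Y l x z\<bar>) \<le> (\<Sum>z\<in>UNIV. pw (\<lambda>k. \<bar>it k x z\<bar>) l)"
    unfolding Y_def
    by (rule sum_mono, rule pw_abs[OF pw_summ(1)[OF it_bound'] l0]) (use assms m_nonneg in auto)
  also have "\<dots> = (\<Sum>z\<in>UNIV. 1 * pw (\<lambda>k. \<bar>it k x z\<bar>) l)" by simp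
  also have "\<dots> = pw (\<lambda>k. \<Sum>z\<in>UNIV. 1 * \<bar>it k x z\<bar>) l"
  proof (rule pw_lin[symmetric])
    fix z :: 'a
    have "summable (\<lambda>k. \<bar>it k x z * (1/l)^k\<bar>)"
      by (rule pw_summ(1)[OF it_bound']) (use assms m_nonneg in auto)
    thus "summable (\<lambda>k. \<bar>it k x z\<bar> * (1/l)^k)" using l0 by (simp add: abs_mult)
  qed simp
  also have "\<dots> \<le> c1 / (l - m)"
  proof (rule order_trans[OF abs_ge_self], rule pw_bound)
    show "\<bar>\<Sum>z\<in>UNIV. 1 * \<bar>it k x z\<bar>\<bar> \<le> c1 * m ^ k" for k
      using it_l1[OF assms(2), of k] by (simp add: mult.commute)
  qed (use assms in auto)
  finally show ?thesis .
qed

lemma Y_nonneg: "(\<And>z. 0 \<le> x z) \<Longrightarrow> (\<And>z. \<bar>x z\<bar> \<le> c) \<Longrightarrow> m < l \<Longrightarrow> 0 \<le> Y l x z"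
  unfolding Y_def by (rule pw_nonneg[OF it_bound']) (auto intro: it_nonneg)

lemma it_lin: "it k (\<lambda>z. x z + s * y z) = (\<lambda>i. it k x i + s * it k y i)"
proof (induction k)
  case 0 then show ?case by simp
next
  case (Suc k)
  show ?case unfolding it_Suc Suc
    by (rule ext) (simp add: mv_def algebra_simps sum.distrib sum_distrib_left)
qed

definition dd :: "nat \<Rightarrow> real" where "dd k = (\<Sum>z\<in>UNIV. bv z * it k bv z)"
definition jj :: "nat \<Rightarrow> real" where "jj k = (\<Sum>z\<in>UNIV. bv z * it k bw z)"
definition D :: "real \<Rightarrow> real" where "D = pw dd"
definition J :: "real \<Rightarrow> real" where "J = pw jj"
definition b :: "real \<Rightarrow> 'a \<Rightarrow> real" where "b s z = bv z + s * bw z"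

lemma babs: "\<bar>bv z\<bar> \<le> 1" "\<bar>bw z\<bar> \<le> 1" using bv_nonneg[of z] bv_le1[of z] bw_nonneg[of z] bw_le1[of z] by auto

lemma scal_bound:
  assumes "\<And>z. 0 \<le> x z" "\<And>z. x z \<le> 1"
  shows "0 \<le> (\<Sum>z\<in>UNIV. bv z * it k x z)" "(\<Sum>z\<in>UNIV. bv z * it k x z) \<le> m * m ^ k"
proof -
  show "0 \<le> (\<Sum>z\<in>UNIV. bv z * it k x z)"
    by (rule sum_nonneg) (use bv_nonneg it_nonneg assms in auto)
  have "(\<Sum>z\<in>UNIV. bv z * it k x z) \<le> (\<Sum>z\<in>UNIV. bv z * m ^ k)"
  proof (rule sum_mono, rule mult_left_mono)
    fix z show "it k x z \<le> m ^ k" using it_inf[of x 1 k z] assms by force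
  qed (use bv_nonneg in auto)
  also have "\<dots> = (\<Sum>z\<in>UNIV. bv z) * m ^ k" by (simp add: sum_distrib_right)
  also have "\<dots> \<le> m * m ^ k" by (rule mult_right_mono[OF bv_l1]) simp
  finally show "(\<Sum>z\<in>UNIV. bv z * it k x z) \<le> m * m ^ k" .
qed

lemma dd_bound: "0 \<le> dd k" "\<bar>dd k\<bar> \<le> m * m ^ k"
  using scal_bound[of bv k] bv_nonneg bv_le1 unfolding dd_def by auto
lemma jj_bound: "0 \<le> jj k" "\<bar>jj k\<bar> \<le> m * m ^ k"
  using scal_bound[of bw k] bw_nonneg bw_le1 unfolding jj_def by auto

lemma b_abs1: "s * s = 1 \<Longrightarrow> \<bar>b s z\<bar> \<le> bv z + bw z"
proof -
  assume "s * s = 1"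
  hence "s = 1 \<or> s = -1" by (simp add: square_eq_1_iff)
  hence s1: "\<bar>s\<bar> = 1" by auto
  have "\<bar>b s z\<bar> \<le> \<bar>bv z\<bar> + \<bar>s * bw z\<bar>" unfolding b_def by (rule abs_triangle_ineq)
  also have "\<bar>s * bw z\<bar> = \<bar>bw z\<bar>" using s1 by (simp add: abs_mult)
  finally show ?thesis using bv_nonneg[of z] bw_nonneg[of z] by simp
qed

lemma b_abs: "s * s = 1 \<Longrightarrow> \<bar>b s z\<bar> \<le> 2"
  using b_abs1[of s z] bv_le1[of z] bw_le1[of z] by linarith

lemma b_l1: "s * s = 1 \<Longrightarrow> (\<Sum>z\<in>UNIV. \<bar>b s z\<bar>) \<le> 2 * m"
proof -
  assume s: "s * s = 1"
  have "(\<Sum>z\<in>UNIV. \<bar>b s z\<bar>) \<le> (\<Sum>z\<in>UNIV. bv z + bw z)"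
    by (rule sum_mono) (rule b_abs1[OF s])
  also have "\<dots> \<le> 2 * m" using bv_l1 bw_l1 by (simp add: sum.distrib)
  finally show ?thesis .
qed

lemma b_s: "s * s = 1 \<Longrightarrow> b s (\<sigma> z) = s * b s z"
  unfolding b_def by (simp add: bv_s bw_s algebra_simps)

lemma b_supp: "z \<notin> Rs \<Longrightarrow> b s z = 0" unfolding b_def by (simp add: bv_supp bw_supp)

lemma G_eq:
  assumes "s * s = 1" "m < l"
  shows "(\<Sum>z\<in>UNIV. bv z * Y l (b s) z) = D l + s * J l"
proof -
  have "(\<Sum>z\<in>UNIV. bv z * Y l (b s) z) = pw (\<lambda>k. \<Sum>z\<in>UNIV. bv z * it k (b s) z) l"
    unfolding Y_def by (rule pw_lin[symmetric]) (use Y_summ[OF b_abs[OF assms(1)] assms(2)] in auto)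
  also have "(\<lambda>k. \<Sum>z\<in>UNIV. bv z * it k (b s) z) = (\<lambda>k. dd k + s * jj k)"
    unfolding b_def it_lin dd_def jj_def by (simp add: algebra_simps sum.distrib sum_distrib_left)
  also have "pw (\<lambda>k. dd k + s * jj k) l = D l + s * J l"
  proof -
    have sd: "summable (\<lambda>k. dd k * (1/l)^k)" by (rule pw_summ(2)[OF dd_bound(2)]) (use assms in auto)
    have sj: "summable (\<lambda>k. jj k * (1/l)^k)" by (rule pw_summ(2)[OF jj_bound(2)]) (use assms in auto)
    have sj': "summable (\<lambda>k. s * jj k * (1/l)^k)" using summable_mult[OF sj, of s] by (simp add: mult.assoc)
    show ?thesis unfolding D_def J_def using pw_add[OF sd sj'] pw_scale2[OF sj] by simp
  qed
  finally show ?thesis .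
qed

lemma walkR:
  "(\<And>i. i \<le> k \<Longrightarrow> g i \<in> Rs) \<Longrightarrow> (\<And>i. i < k \<Longrightarrow> E (g i) (g (Suc i))) \<Longrightarrow> E (g k) (\<sigma> v)
   \<Longrightarrow> 1 \<le> it k bw (g 0)"
proof (induction k arbitrary: g)
  case 0
  then show ?case by (simp add: bw_def A_def adj_matrix_def)
next
  case (Suc k)
  have ih: "1 \<le> it k bw (g (Suc 0))"
    using Suc.IH[of "\<lambda>i. g (Suc i)"] Suc.prems by auto
  have a: "AR (g 0) (g 1) = 1" using Suc.prems(1)[of 0] Suc.prems(1)[of 1] Suc.prems(2)[of 0]
    by (simp add: AR_def A_def adj_matrix_def)
  have "AR (g 0) (g 1) * it k bw (g 1) \<le> (\<Sum>w\<in>UNIV. AR (g 0) w * it k bw w)"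
    by (rule member_le_sum) (auto intro!: mult_nonneg_nonneg AR_nonneg it_nonneg bw_nonneg)
  then show ?case using a ih by (simp add: it_Suc mv_def)
qed

definition dist where "dist = graph_dist E v (\<sigma> v)"

lemma dist_props:
  shows "1 \<le> dist" "(E ^^ dist) v (\<sigma> v)" "\<And>n. n < dist \<Longrightarrow> \<not> (E ^^ n) v (\<sigma> v)"
proof -
  have ex: "\<exists>n. (E ^^ n) v (\<sigma> v)"
    using cg unfolding connected_graph_def by (simp add: rtranclp_imp_relpowp)
  show dp: "(E ^^ dist) v (\<sigma> v)" unfolding dist_def graph_dist_def by (rule LeastI_ex[OF ex])
  show "\<And>n. n < dist \<Longrightarrow> \<not> (E ^^ n) v (\<sigma> v)" unfolding dist_def graph_dist_def
    by (rule not_less_Least)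
  show "1 \<le> dist"
  proof (rule ccontr)
    assume "\<not> 1 \<le> dist" hence "dist = 0" by simp
    with dp vne show False by simp
  qed
qed

lemma dist1: "dist = 1 \<Longrightarrow> A v (\<sigma> v) = 1"
  using dist_props(2) by (auto simp: A_def adj_matrix_def relcompp_apply)

lemma dist2:
  assumes "2 \<le> dist"
  shows "A v (\<sigma> v) = 0" "1 \<le> jj (dist - 2)" "1 \<le> m"
proof -
  have "\<not> (E ^^ 1) v (\<sigma> v)" using dist_props(3)[of 1] assms by simp
  thus "A v (\<sigma> v) = 0" by (auto simp: A_def adj_matrix_def relcompp_apply)
  obtain f where f: "f 0 = v" "f dist = \<sigma> v" "\<And>i. i < dist \<Longrightarrow> E (f i) (f (Suc i))"
    using dist_props(2) unfolding relpowp_fun_conv by blast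
  have inR: "f i \<in> Rs" if "0 < i" "i < dist" for i
  proof -
    have "f i \<noteq> v"
    proof
      assume fi: "f i = v"
      have "(E ^^ (dist - i)) v (\<sigma> v)" unfolding relpowp_fun_conv
      proof (rule exI[of _ "\<lambda>j. f (i + j)"], intro conjI allI impI)
        show "f (i + 0) = v" using fi by simp
        show "f (i + (dist - i)) = \<sigma> v" using that f(2) by simp
        fix j assume "j < dist - i"
        hence "i + j < dist" by simp
        from f(3)[OF this] show "E (f (i + j)) (f (i + Suc j))" by simp
      qed
      with dist_props(3)[of "dist - i"] that show False by simp
    qed
    moreover have "f i \<noteq> \<sigma> v"
    proof
      assume fi: "f i = \<sigma> v"
      have "(E ^^ i) v (\<sigma> v)" unfolding relpowp_fun_conv
      proof (rule exI[of _ f], intro conjI allI impI)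
        show "f 0 = v" "f i = \<sigma> v" using f(1) fi by auto
        fix j assume "j < i"
        with that have "j < dist" by simp
        from f(3)[OF this] show "E (f j) (f (Suc j))" .
      qed
      with dist_props(3)[of i] that show False by simp
    qed
    ultimately show ?thesis unfolding Rs_def by simp
  qed
  have w: "1 \<le> it (dist - 2) bw (f 1)"
  proof -
    have "1 \<le> it (dist - 2) bw ((\<lambda>i. f (Suc i)) 0)"
    proof (rule walkR)
      show "f (Suc i) \<in> Rs" if "i \<le> dist - 2" for i using inR[of "Suc i"] that assms by auto
      show "E (f (Suc i)) (f (Suc (Suc i)))" if "i < dist - 2" for i using f(3)[of "Suc i"] that by auto
      have e1: "Suc (dist - 2) = dist - 1" "Suc (dist - 1) = dist" "dist - 1 < dist" using assms by auto
      show "E (f (Suc (dist - 2))) (\<sigma> v)" using f(3)[OF e1(3)] f(2) unfolding e1(1) e1(2) by simp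
    qed
    thus ?thesis by simp
  qed
  have e1: "E v (f 1)" using f(3)[of 0] f(1) assms by simp
  have bv1: "bv (f 1) = 1" using inR[of 1] assms e1 Esym by (simp add: bv_def A_def adj_matrix_def)
  have "bv (f 1) * it (dist - 2) bw (f 1) \<le> jj (dist - 2)"
    unfolding jj_def by (rule member_le_sum) (auto intro!: mult_nonneg_nonneg it_nonneg bw_nonneg bv_nonneg)
  thus "1 \<le> jj (dist - 2)" using bv1 w by simp
  have "A v (f 1) \<le> (\<Sum>y\<in>UNIV. A v y)" by (rule member_le_sum) (auto simp: A_nonneg)
  thus "1 \<le> m" using deg_le[of v] e1 by (simp add: A_def adj_matrix_def)
qed

end


context gsetup
begin

abbreviation HH :: "real \<Rightarrow> 'a \<Rightarrow> 'a \<Rightarrow> real" where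
  "HH Q \<equiv> hamiltonian E Q v (\<sigma> v)"

lemma HH_sym: "HH Q x y = HH Q y x"
  unfolding hamiltonian_def A_def[symmetric] using A_sym by auto

lemma v_notR: "v \<notin> Rs" "\<sigma> v \<notin> Rs" unfolding Rs_def by auto

lemma sum_H:
  "(\<Sum>z\<in>UNIV. HH Q x z * \<phi> z) = (\<Sum>z\<in>UNIV. A x z * \<phi> z) + (if x = v \<or> x = \<sigma> v then Q * \<phi> x else 0)"
proof -
  have "(\<Sum>z\<in>UNIV. HH Q x z * \<phi> z) = (\<Sum>z\<in>UNIV. A x z * \<phi> z + (if x = z \<and> (x = v \<or> x = \<sigma> v) then Q * \<phi> z else 0))"
    unfolding hamiltonian_def A_def[symmetric] by (rule sum.cong) (auto simp: algebra_simps)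
  also have "\<dots> = (\<Sum>z\<in>UNIV. A x z * \<phi> z) + (\<Sum>z\<in>UNIV. (if x = z \<and> (x = v \<or> x = \<sigma> v) then Q * \<phi> z else 0))"
    by (rule sum.distrib)
  also have "(\<Sum>z\<in>UNIV. (if x = z \<and> (x = v \<or> x = \<sigma> v) then Q * \<phi> z else 0)) = (if x = v \<or> x = \<sigma> v then Q * \<phi> x else 0)"
    by (cases "x = v \<or> x = \<sigma> v") simp_all
  finally show ?thesis .
qed

lemma eigen:
  assumes s: "s * s = 1" and ml: "m < l"
    and root: "l = Q + s * A v (\<sigma> v) + D l + s * J l"
  shows "(\<Sum>z\<in>UNIV. HH Q x z * ((if z = v then 1 else 0) + s * (if z = \<sigma> v then 1 else 0) + Y l (b s) z))
       = l * ((if x = v then 1 else 0) + s * (if x = \<sigma> v then 1 else 0) + Y l (b s) x)"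
proof -
  define Yb where "Yb = Y l (b s)"
  have bb: "\<And>z. \<bar>b s z\<bar> \<le> 2" by (rule b_abs[OF s])
  have Ys: "z \<notin> Rs \<Longrightarrow> Yb z = 0" for z unfolding Yb_def by (rule Y_supp) (auto simp: b_supp)
  have Yv: "Yb v = 0" "Yb (\<sigma> v) = 0" using Ys v_notR by auto
  have vne': "v \<noteq> \<sigma> v" using vne by metis
  have sumA: "(\<Sum>z\<in>UNIV. A x z * ((if z = v then 1 else 0) + s * (if z = \<sigma> v then 1 else 0) + Yb z))
      = A x v + s * A x (\<sigma> v) + (\<Sum>z\<in>UNIV. A x z * Yb z)"
    by (simp add: algebra_simps sum.distrib if_distrib[where f="\<lambda>a. _ * a"] cong: if_cong)
  have SR: "x \<in> Rs \<Longrightarrow> (\<Sum>z\<in>UNIV. A x z * Yb z) = mv Yb x"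
    unfolding mv_def by (rule sum.cong) (auto simp: AR_def Ys)
  have Sv: "(\<Sum>z\<in>UNIV. A v z * Yb z) = (\<Sum>z\<in>UNIV. bv z * Yb z)"
    by (rule sum.cong) (auto simp: bv_def Ys A_sym)
  have Sw: "(\<Sum>z\<in>UNIV. A (\<sigma> v) z * Yb z) = (\<Sum>z\<in>UNIV. bw z * Yb z)"
    by (rule sum.cong) (auto simp: bw_def Ys A_sym)
  have Ysym: "Yb (\<sigma> z) = s * Yb z" for z
    unfolding Yb_def by (rule Y_s[of "b s" s 2 l, OF b_s[OF s] bb ml])
  have sym: "(\<Sum>z\<in>UNIV. bw z * Yb z) = s * (\<Sum>z\<in>UNIV. bv z * Yb z)"
  proof -
    have "(\<Sum>z\<in>UNIV. bw z * Yb z) = (\<Sum>z\<in>UNIV. bw (\<sigma> z) * Yb (\<sigma> z))"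
      by (rule sum_s[symmetric, where f="\<lambda>z. bw z * Yb z"])
    also have "\<dots> = s * (\<Sum>z\<in>UNIV. bv z * Yb z)"
      by (simp add: bw_s Ysym sum_distrib_left mult_ac)
    finally show ?thesis .
  qed
  have G: "(\<Sum>z\<in>UNIV. bv z * Yb z) = l - Q - s * A v (\<sigma> v)"
    using G_eq[OF s ml] root unfolding Yb_def by simp
  consider "x = v" | "x = \<sigma> v" | "x \<in> Rs" unfolding Rs_def by auto
  then have "(\<Sum>z\<in>UNIV. HH Q x z * ((if z = v then 1 else 0) + s * (if z = \<sigma> v then 1 else 0) + Yb z))
       = l * ((if x = v then 1 else 0) + s * (if x = \<sigma> v then 1 else 0) + Yb x)"
  proof cases
    case 1
    then show ?thesis unfolding sum_H sumA using Sv G Yv vne' by simp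
  next
    case 2
    define G' where "G' = (\<Sum>z\<in>UNIV. bv z * Yb z)"
    have g2: "s * G' = s * (l - Q - s * A v (\<sigma> v))" using G unfolding G'_def by simp
    have "(\<Sum>z\<in>UNIV. HH Q x z * ((if z = v then 1 else 0) + s * (if z = \<sigma> v then 1 else 0) + Yb z))
        = A (\<sigma> v) v + s * A (\<sigma> v) (\<sigma> v) + (\<Sum>z\<in>UNIV. A (\<sigma> v) z * Yb z) + Q * s"
      unfolding sum_H sumA using 2 Yv vne' by simp
    also have "\<dots> = A v (\<sigma> v) + s * G' + Q * s" unfolding G'_def Sw sym using A_sym[of "\<sigma> v" v] by simp
    also have "\<dots> = A v (\<sigma> v) + s * l - s * Q - (s * s) * A v (\<sigma> v) + Q * s"
      by (subst g2) algebra
    also have "\<dots> = l * s" using s by simp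
    also have "l * s = l * ((if x = v then 1 else 0) + s * (if x = \<sigma> v then 1 else 0) + Yb x)"
      using 2 Yv vne' by simp
    finally show ?thesis .
  next
    case 3
    hence xn: "x \<noteq> v" "x \<noteq> \<sigma> v" using v_notR by auto
    have "mv Yb x + b s x = l * Yb x" unfolding Yb_def by (rule Y_eq[OF bb ml])
    moreover have "b s x = A x v + s * A x (\<sigma> v)" using 3 by (simp add: b_def bv_def bw_def)
    ultimately show ?thesis unfolding sum_H sumA using SR[OF 3] xn by simp
  qed
  thus ?thesis unfolding Yb_def .
qed

definition UU :: "real \<Rightarrow> real \<Rightarrow> 'a \<Rightarrow> 'a \<Rightarrow> complex" where
  "UU Q t = mat_exp (\<lambda>x y. \<i> * complex_of_real (t * HH Q x y))"

lemma UU_alt: "(\<lambda>x y. \<i> * complex_of_real (t * HH Q x y)) = (\<lambda>x y. (\<i> * of_real t) * of_real (HH Q x y))"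
  by (simp add: mult_ac)

lemma UU_unitary: "(\<Sum>z\<in>UNIV. cnj (UU Q t z x) * UU Q t z y) = (if x = y then 1 else 0)"
proof -
  define c where "c = \<i> * complex_of_real t"
  define P where "P = (\<lambda>x y. complex_of_real (HH Q x y))"
  have U: "UU Q t = mat_exp (\<lambda>x y. c * P x y)" unfolding UU_def UU_alt c_def P_def ..
  have "cnj (UU Q t z x) = mat_exp (\<lambda>x y. - c * P x y) x z" for z
  proof -
    have "cnj (UU Q t z x) = mat_exp (\<lambda>x y. cnj (c * P x y)) z x" unfolding U by (rule mat_exp_cnj)
    also have "(\<lambda>x y. cnj (c * P x y)) = (\<lambda>x y. - c * P x y)" unfolding c_def P_def by simp
    also have "mat_exp (\<lambda>x y. - c * P x y) z x = mat_exp (\<lambda>x y. - c * P x y) x z"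
      by (rule mat_exp_sym) (simp add: P_def HH_sym)
    finally show ?thesis .
  qed
  hence "(\<Sum>z\<in>UNIV. cnj (UU Q t z x) * UU Q t z y) = (\<Sum>z\<in>UNIV. mat_exp (\<lambda>x y. - c * P x y) x z * mat_exp (\<lambda>x y. c * P x y) z y)"
    unfolding U by simp
  also have "\<dots> = (if x = y then 1 else 0)" by (rule mat_exp_inverse)
  finally show ?thesis .
qed

lemma UU_eigen:
  assumes "\<And>x. (\<Sum>z\<in>UNIV. HH Q x z * \<phi> z) = l * \<phi> x"
  shows "(\<Sum>z\<in>UNIV. UU Q t x z * complex_of_real (\<phi> z)) = exp (\<i> * complex_of_real (t * l)) * complex_of_real (\<phi> x)"
  unfolding UU_def
proof (rule mat_exp_eigen)
  fix x
  have "(\<Sum>z\<in>UNIV. \<i> * complex_of_real (t * HH Q x z) * complex_of_real (\<phi> z))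
      = \<i> * complex_of_real t * complex_of_real (\<Sum>z\<in>UNIV. HH Q x z * \<phi> z)"
    by (simp add: sum_distrib_left mult_ac)
  also have "\<dots> = \<i> * complex_of_real (t * l) * complex_of_real (\<phi> x)" using assms by (simp add: mult_ac)
  finally show "(\<Sum>z\<in>UNIV. \<i> * complex_of_real (t * HH Q x z) * complex_of_real (\<phi> z))
      = \<i> * complex_of_real (t * l) * complex_of_real (\<phi> x)" .
qed

lemma UU_small:
  "(cmod (\<Sum>z\<in>UNIV. UU Q t x z * complex_of_real (w z)))\<^sup>2 \<le> (\<Sum>z\<in>UNIV. (w z)\<^sup>2)"
proof -
  have "(cmod (\<Sum>z\<in>UNIV. UU Q t x z * complex_of_real (w z)))\<^sup>2
      \<le> (\<Sum>x\<in>UNIV. (cmod (\<Sum>z\<in>UNIV. UU Q t x z * complex_of_real (w z)))\<^sup>2)"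
    by (rule member_le_sum) auto
  also have "\<dots> = (\<Sum>z\<in>UNIV. (cmod (complex_of_real (w z)))\<^sup>2)"
    by (rule unitary_norm[OF UU_unitary])
  also have "\<dots> = (\<Sum>z\<in>UNIV. (w z)\<^sup>2)" by simp
  finally show ?thesis .
qed

end

lemma exp_diff_bound:
  fixes a b \<eta> :: real
  assumes "a - b = pi - \<eta>"
  shows "1 - \<eta>\<^sup>2 / 4 \<le> cmod ((exp (\<i> * complex_of_real a) - exp (\<i> * complex_of_real b)) / 2)"
proof -
  have e: "exp (\<i> * complex_of_real a) = exp (\<i> * complex_of_real b) * exp (\<i> * complex_of_real (a - b))"
    by (simp add: exp_add[symmetric] algebra_simps)
  have e2: "exp (\<i> * complex_of_real a) - exp (\<i> * complex_of_real b)
      = exp (\<i> * complex_of_real b) * (exp (\<i> * complex_of_real (a - b)) - 1)"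
    by (subst e) (simp only: right_diff_distrib mult_1_right)
  have "cmod (exp (\<i> * complex_of_real a) - exp (\<i> * complex_of_real b))
      = cmod (exp (\<i> * complex_of_real (a - b)) - 1)"
    unfolding e2 norm_mult norm_exp_i_times by simp
  also have "\<dots> \<ge> \<bar>Re (exp (\<i> * complex_of_real (a - b)) - 1)\<bar>" by (rule abs_Re_le_cmod)
  finally have 1: "\<bar>cos (a - b) - 1\<bar> \<le> cmod (exp (\<i> * complex_of_real a) - exp (\<i> * complex_of_real b))"
    by (simp add: Re_exp)
  have "cos (a - b) = - cos \<eta>" using assms by simp
  moreover have "cos \<eta> \<ge> 1 - \<eta>\<^sup>2 / 2"
  proof -
    have "cos \<eta> = 1 - 2 * sin (\<eta>/2) ^ 2" using cos_double_sin[of "\<eta>/2"] by simp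
    moreover have "sin (\<eta>/2) ^ 2 \<le> (\<eta>/2)^2"
      using abs_sin_x_le_abs_x[of "\<eta>/2"] by (metis power2_abs power_mono abs_ge_zero)
    ultimately show ?thesis by (simp add: power_divide)
  qed
  ultimately have "2 - \<eta>\<^sup>2 / 2 \<le> \<bar>cos (a - b) - 1\<bar>" by simp
  with 1 show ?thesis by (simp add: norm_divide)
qed



lemma gap_core:
  fixes \<Delta> G0 S Dd :: real
  assumes "\<Delta> = G0 + Dd" "\<bar>Dd\<bar> \<le> \<bar>\<Delta>\<bar> * S" "0 \<le> S" "S < 1" "0 < G0"
  shows "0 < \<Delta>" "G0 \<le> \<Delta> * (1 + S)"
proof -
  have Dl: "- Dd \<le> \<bar>\<Delta>\<bar> * S" "Dd \<le> \<bar>\<Delta>\<bar> * S" using abs_le_D2[OF assms(2)] abs_le_D1[OF assms(2)] by auto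
  show pos: "0 < \<Delta>"
  proof (rule ccontr)
    assume n: "\<not> 0 < \<Delta>"
    hence "\<bar>\<Delta>\<bar> = - \<Delta>" by simp
    hence "- Dd \<le> - (\<Delta> * S)" using Dl(1) by simp
    hence "\<Delta> * 1 - \<Delta> * S \<ge> G0" using assms(1) by simp
    hence "\<Delta> * (1 - S) \<ge> G0" by (simp add: right_diff_distrib)
    moreover have "\<Delta> * (1 - S) \<le> 0" using n assms(4) by (simp add: mult_nonpos_nonneg)
    ultimately show False using assms(5) by linarith
  qed
  hence "\<bar>\<Delta>\<bar> = \<Delta>" by simp
  hence "- Dd \<le> \<Delta> * S" using Dl(1) by simp
  hence "G0 \<le> \<Delta> * 1 + \<Delta> * S" using assms(1) by simp
  thus "G0 \<le> \<Delta> * (1 + S)" by (simp add: distrib_left)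
qed

lemma eta_bound:
  fixes S Q :: real
  assumes "0 \<le> S" "S \<le> 1/Q" "1 \<le> Q"
  shows "0 \<le> pi - pi / ((1 + S) * (1 + 1/Q))" "pi - pi / ((1 + S) * (1 + 1/Q)) \<le> 12 / Q"
proof -
  define P where "P = (1 + S) * (1 + 1/Q)"
  have Q0: "0 < Q" using assms by linarith
  have "1 * 1 \<le> (1 + S) * (1 + 1/Q)" by (rule mult_mono) (use assms Q0 in auto)
  hence P1: "1 \<le> P" unfolding P_def by simp
  have "pi / P \<le> pi / 1" by (rule divide_left_mono) (use P1 pi_gt_zero in auto)
  thus "0 \<le> pi - pi / ((1 + S) * (1 + 1/Q))" unfolding P_def by simp
  have "pi - pi / P = pi * (P - 1) / P" using P1 by (simp add: diff_divide_distrib right_diff_distrib)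
  also have "\<dots> \<le> pi * (P - 1) / 1"
    by (rule divide_left_mono) (use P1 pi_gt_zero in auto)
  also have "\<dots> = pi * (P - 1)" by simp
  also have "P - 1 = S + 1/Q + S/Q" unfolding P_def by (simp add: algebra_simps add_divide_distrib)
  also have "\<dots> \<le> 3 / Q"
  proof -
    have "1/Q \<le> 1" using assms(3) by simp
    hence "S \<le> 1" using assms(2) by linarith
    hence "S / Q \<le> 1/Q" by (rule divide_right_mono) (use Q0 in simp)
    moreover have "3 / Q = 1/Q + 1/Q + 1/Q" by simp
    ultimately show ?thesis using assms(2) by linarith
  qed
  also have "pi * (3 / Q) \<le> 4 * (3 / Q)" using pi_less_4 Q0 by (intro mult_right_mono) auto
  finally show "pi - pi / ((1 + S) * (1 + 1/Q)) \<le> 12 / Q" unfolding P_def using Q0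
    by (simp add: mult_left_mono)
qed

lemma final_num:
  fixes x \<eta> r \<epsilon> :: real
  assumes "1 - \<eta>\<^sup>2 / 4 - r \<le> x" "\<eta>\<^sup>2 \<le> \<epsilon>" "r \<le> \<epsilon> / 4" "0 < \<epsilon>" "\<epsilon> < 1"
  shows "1 - \<epsilon> \<le> x\<^sup>2"
proof -
  have x: "1 - \<epsilon>/2 \<le> x" using assms by linarith
  have "0 \<le> 1 - \<epsilon>/2" using assms by simp
  hence "(1 - \<epsilon>/2)\<^sup>2 \<le> x\<^sup>2" by (rule power_mono[OF x])
  moreover have "1 - \<epsilon> \<le> (1 - \<epsilon>/2)\<^sup>2" by (simp add: power2_eq_square algebra_simps)
  ultimately show ?thesis by linarith
qed

locale fin = gsetup E \<sigma> v for E :: "'a::finite \<Rightarrow> 'a \<Rightarrow> bool" and \<sigma> v +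
  fixes Q \<epsilon> :: real
  assumes eps0: "0 < \<epsilon>" and eps1: "\<epsilon> < 1"
    and Qb: "Q \<ge> 256 * (real (max_degree E) + 1) / \<epsilon>\<^sup>2"
begin

lemma Qe: "256 * (m + 1) \<le> Q * \<epsilon>\<^sup>2"
  using Qb eps0 by (simp add: divide_le_eq)

lemma Qm: "256 * (m + 1) \<le> Q"
proof -
  have "0 \<le> 256 * (m + 1) / \<epsilon>\<^sup>2" by simp
  hence Q0: "0 \<le> Q" using Qb by linarith
  have "\<epsilon>\<^sup>2 \<le> 1" using eps0 eps1 by (simp add: power_le_one)
  hence "Q * \<epsilon>\<^sup>2 \<le> Q * 1" by (rule mult_left_mono[OF _ Q0])
  thus ?thesis using Qe by simp
qed

lemma Qm': "256 * m + 256 \<le> Q" using Qm by (simp add: algebra_simps)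

definition L where "L = Q - 2"

lemma Lb: "254 + 256 * m \<le> L" unfolding L_def using Qm by simp

lemma DJ_bounds:
  assumes "L \<le> l"
  shows "0 \<le> D l" "D l \<le> 1/2" "0 \<le> J l" "J l \<le> 1/2"
proof -
  have ml: "m < l" using assms Lb by simp
  have lm: "0 < l - m" using ml by simp
  have "m \<le> 1/2 * (l - m)" using assms Lb by simp
  hence half: "m / (l - m) \<le> 1/2" by (subst pos_divide_le_eq[OF lm])
  show "0 \<le> D l" unfolding D_def by (rule pw_nonneg[OF dd_bound(2) _ ml dd_bound(1)]) simp
  show "0 \<le> J l" unfolding J_def by (rule pw_nonneg[OF jj_bound(2) _ ml jj_bound(1)]) simp
  have "\<bar>D l\<bar> \<le> m / (l - m)" unfolding D_def by (rule pw_bound[OF dd_bound(2) _ ml]) simp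
  hence "D l \<le> m / (l - m)" by (rule abs_le_D1)
  thus "D l \<le> 1/2" using half by linarith
  have "\<bar>J l\<bar> \<le> m / (l - m)" unfolding J_def by (rule pw_bound[OF jj_bound(2) _ ml]) simp
  hence "J l \<le> m / (l - m)" by (rule abs_le_D1)
  thus "J l \<le> 1/2" using half by linarith
qed

lemma A0_bound: "0 \<le> A v (\<sigma> v)" "A v (\<sigma> v) \<le> 1" using A_nonneg A_le1 by auto

lemma root:
  assumes s: "s = 1 \<or> s = -1"
  shows "\<exists>l. L \<le> l \<and> l \<le> Q + 2 \<and> l = Q + s * A v (\<sigma> v) + D l + s * J l"
proof -
  define h where "h l = l - (Q + s * A v (\<sigma> v) + D l + s * J l)" for l
  have LQ: "L \<le> Q + 2" unfolding L_def by simp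
  have X: "\<bar>s * A v (\<sigma> v) + D l + s * J l\<bar> \<le> 2" if "L \<le> l" for l
    using DJ_bounds[OF that] A0_bound s by auto
  have "h L \<le> 0" unfolding h_def using X[of L] by (simp add: L_def abs_le_iff)
  moreover have "0 \<le> h (Q + 2)" unfolding h_def using X[of "Q + 2"] LQ by (simp add: abs_le_iff)
  moreover have "\<forall>x. L \<le> x \<and> x \<le> Q + 2 \<longrightarrow> isCont h x"
  proof (intro allI impI)
    fix x assume "L \<le> x \<and> x \<le> Q + 2"
    hence x: "2 * m + 1 < x" using Lb by simp
    have "isCont D x" unfolding D_def by (rule pw_cont[OF dd_bound(2) _ x]) simp
    moreover have "isCont J x" unfolding J_def by (rule pw_cont[OF jj_bound(2) _ x]) simp
    ultimately show "isCont h x" unfolding h_def[abs_def] by (intro continuous_intros)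
  qed
  ultimately obtain l where "L \<le> l" "l \<le> Q + 2" "h l = 0"
    using IVT[of h L 0 "Q + 2"] LQ by auto
  thus ?thesis unfolding h_def by auto
qed

lemma main:
  "\<exists>t. 0 < t \<and> t < pi / 2 * (Q + m) ^ (dist - 1) \<and> 1 - \<epsilon> \<le> transfer_prob (HH Q) v (\<sigma> v) t"
proof -
  obtain ls where ls: "L \<le> ls" "ls \<le> Q + 2" "ls = Q + 1 * A v (\<sigma> v) + D ls + 1 * J ls"
    using root[of 1] by auto
  obtain la where la: "L \<le> la" "la \<le> Q + 2" "la = Q + (-1) * A v (\<sigma> v) + D la + (-1) * J la"
    using root[of "-1"] by auto
  define A0 where "A0 = A v (\<sigma> v)"
  define \<Delta> where "\<Delta> = ls - la"
  define B where "B = (Q + m) ^ (dist - 1)"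
  define S where "S = m / (L * (L - 2 * m))"
  define G0 where "G0 = 2 * A0 + J ls + J la"
  have Lb': "254 + 256 * m \<le> L" by (rule Lb)
  have m0: "0 \<le> m" by simp
  have Lpos1: "0 < L" using Lb' m0 by linarith
  have Lpos2: "2 * m < L" using Lb' m0 by linarith
  note Lpos = Lpos1 Lpos2
  have Q12: "256 \<le> Q" using Qm by simp
  have Q11: "1 \<le> Q" using Q12 by simp
  note Q1 = Q11 Q12
  have Bpos: "0 < B" unfolding B_def using Q1 by simp
  have Dd: "\<bar>D ls - D la\<bar> \<le> \<bar>\<Delta>\<bar> * S"
    unfolding D_def \<Delta>_def S_def by (rule pw_lip[OF dd_bound(2) m0 Lpos(2) ls(1) la(1)])
  have S0: "0 \<le> S" unfolding S_def using Lpos m0 by simp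
  have SQ: "S \<le> 1/Q"
  proof -
    have "L * (L - 2 * m) \<ge> (Q/2) * (Q/2)"
      by (rule mult_mono) (use Lb' Qm L_def in auto)
    moreover have "(Q/2) * (Q/2) \<ge> m * Q" using Qm m0 Q1 by (simp add: algebra_simps mult_right_mono)
    ultimately have "m * Q \<le> L * (L - 2 * m)" by linarith
    moreover have X0: "0 < L * (L - 2 * m)" using Lpos by simp
    ultimately have "m \<le> L * (L - 2 * m) / Q" using Q1 by (subst pos_le_divide_eq) auto
    hence "m \<le> 1 / Q * (L * (L - 2 * m))" by simp
    thus ?thesis unfolding S_def by (subst pos_divide_le_eq[OF X0])
  qed
  have "1/Q < 1" using Q1 by simp
  hence S1: "S < 1" using SQ by linarith
  have G0b: "2 / B \<le> G0"
  proof (cases "dist = 1")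
    case True
    hence "A0 = 1" unfolding A0_def by (rule dist1)
    moreover have "B = 1" unfolding B_def using True by simp
    ultimately show ?thesis unfolding G0_def using DJ_bounds[OF ls(1)] DJ_bounds[OF la(1)] by simp
  next
    case False
    hence d2: "2 \<le> dist" using dist_props(1) by linarith
    have a0: "A0 = 0" unfolding A0_def by (rule dist2(1)[OF d2])
    have m1: "1 \<le> m" by (rule dist2(3)[OF d2])
    have Jl: "1 / B \<le> J l" if "L \<le> l" "l \<le> Q + m" for l
    proof -
      have ml: "m < l" using that Lb' by simp
      have l0: "0 < l" using ml m0 by linarith
      have "jj (dist - 2) * (1/l)^(Suc (dist - 2)) \<le> J l"
        unfolding J_def by (rule pw_ge_term[OF jj_bound(2) m0 ml jj_bound(1)])
      moreover have "Suc (dist - 2) = dist - 1" using d2 by simp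
      ultimately have "jj (dist - 2) * (1/l)^(dist - 1) \<le> J l" by simp
      moreover have "(1/l)^(dist - 1) \<le> jj (dist - 2) * (1/l)^(dist - 1)"
        using dist2(2)[OF d2] l0 by (simp add: mult_le_cancel_right1)
      moreover have "1 / B \<le> (1/l)^(dist - 1)"
      proof -
        have "(1/(Q + m))^(dist - 1) \<le> (1/l)^(dist - 1)"
          by (rule power_mono) (use that l0 Q1 in \<open>auto simp: divide_simps\<close>)
        thus ?thesis unfolding B_def by (simp add: power_one_over)
      qed
      ultimately show ?thesis by linarith
    qed
    have "ls \<le> Q + m" using ls(3) a0 DJ_bounds[OF ls(1)] m1 unfolding A0_def by simp
    hence "1 / B \<le> J ls" by (rule Jl[OF ls(1)])
    moreover have "la \<le> Q + m" using la(3) a0 DJ_bounds[OF la(1)] m1 unfolding A0_def by simp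
    hence "1 / B \<le> J la" by (rule Jl[OF la(1)])
    ultimately show ?thesis unfolding G0_def using a0 by simp
  qed
  have "0 < 2 / B" using Bpos by simp
  hence G0pos: "0 < G0" using G0b by linarith
  have Deq: "\<Delta> = G0 + (D ls - D la)" unfolding \<Delta>_def G0_def A0_def using ls(3) la(3) by simp
  note gc = gap_core[OF Deq Dd S0 S1 G0pos]
  define t where "t = pi / (\<Delta> * (1 + S) * (1 + 1/Q))"
  have iQ: "0 < 1/Q" using Q1 by simp
  have p1: "0 < 1 + S" using S0 by linarith
  have p2: "0 < 1 + 1/Q" using iQ by linarith
  have P0: "0 < (1 + S) * (1 + 1/Q)" using p1 p2 by (rule mult_pos_pos)
  have tpos: "0 < t" unfolding t_def using gc(1) P0 by (simp add: mult.assoc)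
  have tB: "t < pi / 2 * B"
  proof -
    have "2 / B \<le> \<Delta> * (1 + S)" using G0b gc(2) by linarith
    moreover have "\<Delta> * (1 + S) * 1 < \<Delta> * (1 + S) * (1 + 1/Q)"
      by (rule mult_strict_left_mono) (use gc(1) p1 iQ in auto)
    ultimately have lt: "2 / B < \<Delta> * (1 + S) * (1 + 1/Q)" by linarith
    have q: "0 < \<Delta> * (1 + S) * (1 + 1/Q)" using gc(1) P0 by (metis mult.assoc mult_pos_pos)
    have q2: "0 < 2 / B" using Bpos by simp
    have "t < pi / (2 / B)" unfolding t_def
      by (rule divide_strict_left_mono[OF lt pi_gt_zero mult_pos_pos[OF q q2]])
    thus ?thesis by simp
  qed
  define \<eta> where "\<eta> = pi - t * \<Delta>"
  have teq: "t * \<Delta> = pi / ((1 + S) * (1 + 1/Q))"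
  proof -
    define P where "P = (1 + S) * (1 + 1/Q)"
    have "t = pi / (\<Delta> * P)" unfolding t_def P_def by (simp add: mult.assoc)
    hence "t * \<Delta> = pi / P" using gc(1) by simp
    thus ?thesis unfolding P_def .
  qed
  have eta: "0 \<le> \<eta>" "\<eta> \<le> 12 / Q" unfolding \<eta>_def teq using eta_bound[OF S0 SQ Q1(1)] by auto
  have eta2: "\<eta>\<^sup>2 \<le> \<epsilon>"
  proof -
    have "\<eta>\<^sup>2 \<le> (12 / Q)\<^sup>2" using eta by (intro power_mono) auto
    also have "\<dots> = 144 / Q\<^sup>2" by (simp add: power_divide)
    also have "\<dots> \<le> \<epsilon>"
    proof -
      have Qe': "256 * m + 256 \<le> Q * \<epsilon>\<^sup>2" using Qe by (simp add: algebra_simps)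
      have "256 \<le> Q * \<epsilon>\<^sup>2" using Qe' m0 by linarith
      moreover have "\<epsilon>\<^sup>2 \<le> \<epsilon>" using eps0 eps1 by (simp add: power2_eq_square mult_le_cancel_left1)
      moreover have "Q * \<epsilon>\<^sup>2 \<le> Q * \<epsilon>" by (rule mult_left_mono) (use calculation(2) Q1 in auto)
      ultimately have qe: "256 \<le> Q * \<epsilon>" by linarith
      have "256 * 1 \<le> Q * \<epsilon> * Q" by (rule mult_mono) (use qe Q1 eps0 in auto)
      hence "144 \<le> \<epsilon> * Q\<^sup>2" by (simp add: power2_eq_square mult_ac)
      moreover have "0 < Q\<^sup>2" using Q1 by simp
      ultimately show ?thesis by (subst pos_divide_le_eq) auto
    qed
    finally show ?thesis .
  qed
  define Ys where "Ys = Y ls (b 1)"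
  define Ya where "Ya = Y la (b (-1))"
  define \<phi>s where "\<phi>s z = (if z = v then 1 else 0) + 1 * (if z = \<sigma> v then 1 else 0) + Ys z" for z
  define \<phi>a where "\<phi>a z = (if z = v then 1 else 0) + (-1) * (if z = \<sigma> v then 1 else 0) + Ya z" for z
  define w where "w z = (Ys z - Ya z) / 2" for z
  have mls1: "m < ls" using ls(1) Lb' by linarith
  have mls2: "m < la" using la(1) Lb' by linarith
  note mls = mls1 mls2
  have es: "(\<Sum>z\<in>UNIV. HH Q x z * \<phi>s z) = ls * \<phi>s x" for x
    unfolding \<phi>s_def Ys_def by (rule eigen) (use mls ls(3) in auto)
  have ea: "(\<Sum>z\<in>UNIV. HH Q x z * \<phi>a z) = la * \<phi>a x" for x
    unfolding \<phi>a_def Ya_def by (rule eigen) (use mls la(3) in auto)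
  have vne': "v \<noteq> \<sigma> v" using vne by metis
  have Yv: "Ys v = 0" "Ya v = 0" unfolding Ys_def Ya_def by (rule Y_supp, simp add: b_supp, simp add: v_notR)+
  have \<phi>v: "\<phi>s v = 1" "\<phi>a v = 1" unfolding \<phi>s_def \<phi>a_def using Yv vne' by auto
  have edec: "(if z = \<sigma> v then 1 else 0) = (\<phi>s z - \<phi>a z) / 2 - w z" for z
    unfolding \<phi>s_def \<phi>a_def w_def by (auto simp: field_simps)
  define U where "U = UU Q t"
  define rc where "rc = (\<Sum>z\<in>UNIV. U v z * complex_of_real (w z))"
  have amp: "U v (\<sigma> v) = (exp (\<i> * complex_of_real (t * ls)) - exp (\<i> * complex_of_real (t * la))) / 2 - rc"
  proof -
    have "(\<Sum>z\<in>UNIV. U v z * complex_of_real (if z = \<sigma> v then 1 else 0)) = (\<Sum>z\<in>UNIV. if z = \<sigma> v then U v z else 0)"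
      by (rule sum.cong) auto
    also have "\<dots> = U v (\<sigma> v)" by (rule trans[OF sum.delta]) auto
    finally have "U v (\<sigma> v) = (\<Sum>z\<in>UNIV. U v z * complex_of_real (if z = \<sigma> v then 1 else 0))"
      by simp
    also have "\<dots> = (\<Sum>z\<in>UNIV. (U v z * complex_of_real (\<phi>s z) - U v z * complex_of_real (\<phi>a z)) / 2
                       - U v z * complex_of_real (w z))"
      unfolding edec by (rule sum.cong) (auto simp: algebra_simps)
    also have "\<dots> = ((\<Sum>z\<in>UNIV. U v z * complex_of_real (\<phi>s z)) - (\<Sum>z\<in>UNIV. U v z * complex_of_real (\<phi>a z))) / 2 - rc"
      unfolding rc_def sum_subtractf sum_divide_distrib[symmetric] by (simp only:)
    also have "(\<Sum>z\<in>UNIV. U v z * complex_of_real (\<phi>s z)) = exp (\<i> * complex_of_real (t * ls))"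
      unfolding U_def using UU_eigen[OF es, of t v] \<phi>v by simp
    also have "(\<Sum>z\<in>UNIV. U v z * complex_of_real (\<phi>a z)) = exp (\<i> * complex_of_real (t * la))"
      unfolding U_def using UU_eigen[OF ea, of t v] \<phi>v by simp
    finally show ?thesis .
  qed
  have big: "1 - \<eta>\<^sup>2 / 4 \<le> cmod ((exp (\<i> * complex_of_real (t * ls)) - exp (\<i> * complex_of_real (t * la))) / 2)"
    by (rule exp_diff_bound) (simp add: \<eta>_def \<Delta>_def algebra_simps)
  have wsq: "(\<Sum>z\<in>UNIV. (w z)\<^sup>2) \<le> 4 * m / (L - m)\<^sup>2"
  proof -
    have Lm: "0 < L - m" using Lb' m0 by linarith
    have bs: "\<And>z. \<bar>b 1 z\<bar> \<le> 2" "\<And>z. \<bar>b (-1) z\<bar> \<le> 2" by (rule b_abs, simp)+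
    have bl: "(\<Sum>z\<in>UNIV. \<bar>b 1 z\<bar>) \<le> 2 * m" "(\<Sum>z\<in>UNIV. \<bar>b (-1) z\<bar>) \<le> 2 * m" by (rule b_l1, simp)+
    have mono: "c / (l - m) \<le> c / (L - m)" if "L \<le> l" "0 \<le> c" for c l
      by (rule divide_left_mono) (use that Lm in auto)
    have wi: "\<bar>w z\<bar> \<le> 2 / (L - m)" for z
    proof -
      have "\<bar>Ys z\<bar> \<le> 2 / (ls - m)" unfolding Ys_def by (rule Y_bound[OF bs(1) mls(1)])
      moreover have "\<bar>Ya z\<bar> \<le> 2 / (la - m)" unfolding Ya_def by (rule Y_bound[OF bs(2) mls(2)])
      ultimately show ?thesis unfolding w_def using mono[OF ls(1), of 2] mono[OF la(1), of 2] by simp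
    qed
    have wl: "(\<Sum>z\<in>UNIV. \<bar>w z\<bar>) \<le> 2 * m / (L - m)"
    proof -
      have "(\<Sum>z\<in>UNIV. \<bar>w z\<bar>) \<le> (\<Sum>z\<in>UNIV. (\<bar>Ys z\<bar> + \<bar>Ya z\<bar>) / 2)"
        unfolding w_def by (rule sum_mono) simp
      also have "\<dots> = ((\<Sum>z\<in>UNIV. \<bar>Ys z\<bar>) + (\<Sum>z\<in>UNIV. \<bar>Ya z\<bar>)) / 2"
        unfolding sum_divide_distrib[symmetric] sum.distrib by (simp only:)
      also have "\<dots> \<le> (2 * m / (ls - m) + 2 * m / (la - m)) / 2"
        using Y_l1[OF bs(1) bl(1) mls(1)] Y_l1[OF bs(2) bl(2) mls(2)] unfolding Ys_def Ya_def by simp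
      also have "\<dots> \<le> 2 * m / (L - m)" using mono[OF ls(1), of "2*m"] mono[OF la(1), of "2*m"] m0 by simp
      finally show ?thesis .
    qed
    have "(\<Sum>z\<in>UNIV. (w z)\<^sup>2) = (\<Sum>z\<in>UNIV. \<bar>w z\<bar> * \<bar>w z\<bar>)" by (simp add: power2_eq_square)
    also have "\<dots> \<le> (\<Sum>z\<in>UNIV. \<bar>w z\<bar> * (2 / (L - m)))"
      by (rule sum_mono, rule mult_left_mono[OF wi]) simp
    also have "\<dots> = (\<Sum>z\<in>UNIV. \<bar>w z\<bar>) * (2 / (L - m))" by (rule sum_distrib_right[symmetric])
    also have "\<dots> \<le> 2 * m / (L - m) * (2 / (L - m))" by (rule mult_right_mono[OF wl]) (use Lm in simp)
    also have "\<dots> = 4 * m / (L - m)\<^sup>2" by (simp add: power2_eq_square)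
    finally show ?thesis .
  qed
  have rsmall: "cmod rc \<le> \<epsilon> / 4"
  proof -
    have "(cmod rc)\<^sup>2 \<le> 4 * m / (L - m)\<^sup>2" unfolding rc_def U_def using UU_small[of Q t v w] wsq by linarith
    also have "4 * m / (L - m)\<^sup>2 \<le> (\<epsilon> / 4)\<^sup>2"
    proof -
      have Lm: "Q / 2 \<le> L - m" using Qm' m0 unfolding L_def by linarith
      have Q0: "0 < Q" using Q1 by linarith
      have "(Q/2)\<^sup>2 \<le> (L - m)\<^sup>2" using Lm Q0 by (intro power_mono) auto
      moreover have "0 < (Q/2)\<^sup>2" using Q0 by simp
      moreover have "0 < (L - m)\<^sup>2" using Lm Q0 by simp
      ultimately have "4 * m / (L - m)\<^sup>2 \<le> 4 * m / (Q/2)\<^sup>2"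
        by (intro divide_left_mono) (auto intro: mult_pos_pos)
      also have "\<dots> \<le> (\<epsilon> / 4)\<^sup>2"
      proof -
        have Qe': "256 * m + 256 \<le> Q * \<epsilon>\<^sup>2" using Qe by (simp add: algebra_simps)
        have "256 * m \<le> Q * \<epsilon>\<^sup>2" using Qe' by linarith
        also have "\<dots> = Q * \<epsilon>\<^sup>2 * 1" by simp
        also have "\<dots> \<le> Q * \<epsilon>\<^sup>2 * Q" by (rule mult_left_mono) (use Q1 in auto)
        finally have "256 * m \<le> Q * \<epsilon>\<^sup>2 * Q" .
        hence "4 * m \<le> (\<epsilon> / 4)\<^sup>2 * (Q/2)\<^sup>2" by (simp add: power2_eq_square mult_ac)
        moreover have "0 < (Q/2)\<^sup>2" using Q0 by simp
        ultimately show ?thesis by (subst pos_divide_le_eq) auto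
      qed
      finally show ?thesis .
    qed
    finally have "(cmod rc)\<^sup>2 \<le> (\<epsilon> / 4)\<^sup>2" .
    thus ?thesis by (rule power2_le_imp_le) (use eps0 in simp)
  qed
  have "1 - \<eta>\<^sup>2 / 4 - cmod rc \<le> cmod (U v (\<sigma> v))"
    unfolding amp using big norm_triangle_ineq2[of "(exp (\<i> * complex_of_real (t * ls)) - exp (\<i> * complex_of_real (t * la))) / 2" rc]
    by linarith
  hence "1 - \<epsilon> \<le> (cmod (U v (\<sigma> v)))\<^sup>2"
    by (rule final_num[OF _ eta2 rsmall eps0 eps1])
  hence "1 - \<epsilon> \<le> transfer_prob (HH Q) v (\<sigma> v) t"
    unfolding transfer_prob_def U_def UU_def .
  with tpos tB show ?thesis unfolding B_def by blast
qed

end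



theorem theorem3:
  fixes E :: "'a::finite \<Rightarrow> 'a \<Rightarrow> bool" and \<sigma> :: "'a \<Rightarrow> 'a"
    and v :: 'a and Q \<epsilon> :: real
  assumes "simple_graph E" and "connected_graph E"
    and "graph_involution E \<sigma>"
    and "\<sigma> v \<noteq> v"
    and "0 < \<epsilon>" and "\<epsilon> < 1"
    and "Q \<ge> 256 * (real (max_degree E) + 1) / \<epsilon>\<^sup>2"
  shows "\<exists>t. 0 < t \<and> t < pi / 2 * (Q + real (max_degree E)) ^ (graph_dist E v (\<sigma> v) - 1)
            \<and> transfer_prob (hamiltonian E Q v (\<sigma> v)) v (\<sigma> v) t \<ge> 1 - \<epsilon>"
proof -
  interpret fin E \<sigma> v Q \<epsilon>
    by unfold_locales (use assms in auto)
  show ?thesis using main unfolding gsetup.dist_def[OF gsetup_axioms] by auto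
qed

end
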